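(* The scheme $\mathsf{xhIBE}$ described below is strongly homomorphic for the class of circuits $\mathbb{C} = \{x \mapsto \langle v, x\rangle : v \in \mathbb{Z}_2^\ell\}$ of linear functions over $\mathbb{Z}_2$: for every identity $\mathsf{id}$, every $C \in \mathbb{C}$, every honestly generated parameters and keys, every bits $b_1,\dots,b_\ell$ and every ciphertexts $\psi_i \gets \mathsf{Encrypt}(\mathsf{PP}, \mathsf{id}, b_i)$, the distributions $\mathsf{Encrypt}(\mathsf{PP}, \mathsf{id}, C(b_1,\dots,b_\ell))$ and $\mathsf{Eval}(\mathsf{PP}, C, \psi_1,\dots,\psi_\ell)$ are statistically indistinguishable.
   Context: Scheme $\mathsf{xhIBE}$. Notation: $\nu:\{0,1\}\to\{1,-1\}$ with $\nu(0)=1,\nu(1)=-1$. $\left(\frac{\cdot}{N}\right)$ is the Jacobi symbol; $\mathbb{Z}_N^\ast[\pm 1]$ is the set of units mod $N$ with Jacobi symbol $\pm 1$. For $b \in \mathbb{Z}_N$ and $c(x) = c_0 + c_1 x$, $\mathsf{GT}(b, c(x)) = \left(\frac{c_0^2 - c_1^2 b}{N}\right)$. $H:\{0,1\}^\ast \to \mathbb{Z}_N^\ast[+1]$ is a full-domain hash. Setup$(1^\lambda)$: sample random primes $p,q$ until $p \equiv q \equiv 3 \pmod 4$; $N = pq$; $\mathsf{PP}=N$, $\mathsf{MSK}=(p,q)$. KeyGen$(\mathsf{MSK},\mathsf{id})$: $a = H(\mathsf{id})$, $r = a^{(N+5-p-q)/8} \bmod N$, output $(\mathsf{id}, r)$.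 Subroutine $E(\mathsf{PP}, a, b)$: sample $t_1, t_2 \xleftarrow{\$} \mathbb{Z}_N^\ast[\nu(b)]$, $g_1, g_2 \xleftarrow{\$} \mathbb{Z}_N^\ast$, set $c(x) = (t_1 + a g_1^2 t_1^{-1}) + 2 g_1 x$, $d(x) = (t_2 - a g_2^2 t_2^{-1}) + 2 g_2 x$; repeat until $\mathsf{GT}(a, c(x)) = 1$ and $\mathsf{GT}(-a, d(x)) = 1$; output $(c(x), d(x))$. Encrypt$(\mathsf{PP}, \mathsf{id}, b)$: $a = H(\mathsf{id})$, output $(c(x), d(x), a)$ with $(c(x),d(x)) \gets E(\mathsf{PP},a,b)$. Decrypt$((\mathsf{id},r), (c(x),d(x),a))$: if $r^2 \equiv a$ and $\mathsf{GT}(a,c(x))=1$ let $e = c$; else if $r^2 \equiv -a$ and $\mathsf{GT}(-a,d(x))=1$ let $e = d$; else output $\bot$; output $\nu^{-1}\big(\left(\frac{e(r)}{N}\right)\big)$. Eval$(\mathsf{PP}, C, (c_i,d_i,a_i)_{i\le\ell})$ for $C = (x \mapsto \langle v,x\rangle)$: abort with $\bot$ unless all $a_i$ equal $a$; $J = \{i : v_i = 1\}$; $c' = \prod_{i\in J} c_i \bmod (x^2 - a)$, $d' = \prod_{i\in J} d_i \bmod (x^2+a)$; $(c_z,d_z) \gets E(\mathsf{PP},a,0)$; output $(c' c_z \bmod (x^2-a),\ d' d_z \bmod (x^2+a),\ a)$. *)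

theory Defs
  imports "HOL-Number_Theory.Number_Theory" "HOL-Probability.Probability"
begin

(* nu : {0,1} -> {1,-1}; bits are modelled as bool, False = 0, True = 1 *)
definition nu :: "bool \<Rightarrow> int" where
  "nu b = (if b then -1 else 1)"

definition Jacobi :: "int \<Rightarrow> int \<Rightarrow> int" where
  "Jacobi a n = (\<Prod>p\<in>#prime_factorization (nat n). Legendre a (int p))"

definition units_mod :: "int \<Rightarrow> int set" where
  "units_mod N = {x. 0 \<le> x \<and> x < N \<and> coprime x N}"

definition unitsJ :: "int \<Rightarrow> int \<Rightarrow> int set" where
  "unitsJ N s = {x \<in> units_mod N. Jacobi x N = s}"

definition inv_mod :: "int \<Rightarrow> int \<Rightarrow> int" where
  "inv_mod N t = (SOME u. 0 \<le> u \<and> u < N \<and> [t * u = 1] (mod N))"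

(* A linear polynomial c0 + c1 x over Z_N is represented by the pair (c0, c1). *)
type_synonym lpoly = "int \<times> int"

definition GT :: "int \<Rightarrow> int \<Rightarrow> lpoly \<Rightarrow> int" where
  "GT N b c = Jacobi (fst c ^ 2 - snd c ^ 2 * b) N"

(* product of c(x) and e(x) in Z_N[x] reduced modulo (x^2 - s) *)
definition pmul :: "int \<Rightarrow> int \<Rightarrow> lpoly \<Rightarrow> lpoly \<Rightarrow> lpoly" where
  "pmul N s c e = ((fst c * fst e + s * snd c * snd e) mod N,
                   (fst c * snd e + snd c * fst e) mod N)"

definition E_cand :: "int \<Rightarrow> int \<Rightarrow> int \<times> int \<times> int \<times> int \<Rightarrow> lpoly \<times> lpoly" where
  "E_cand N a x = (case x of (t1, t2, g1, g2) \<Rightarrow>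
     (((t1 + a * g1^2 * inv_mod N t1) mod N, (2 * g1) mod N),
      ((t2 - a * g2^2 * inv_mod N t2) mod N, (2 * g2) mod N)))"

(* Subroutine E(PP, a, b): rejection sampling of uniform (t1,t2,g1,g2) until acceptance;
   its output distribution is the uniform distribution on the accepted tuples, mapped by E_cand. *)
definition E_acc :: "int \<Rightarrow> int \<Rightarrow> bool \<Rightarrow> (int \<times> int \<times> int \<times> int) set" where
  "E_acc N a b = {x. case x of (t1, t2, g1, g2) \<Rightarrow>
      t1 \<in> unitsJ N (nu b) \<and> t2 \<in> unitsJ N (nu b) \<and>
      g1 \<in> units_mod N \<and> g2 \<in> units_mod N \<and>
      GT N a (fst (E_cand N a x)) = 1 \<and> GT N (-a) (snd (E_cand N a x)) = 1}"

definition E :: "int \<Rightarrow> int \<Rightarrow> bool \<Rightarrow> (lpoly \<times> lpoly) pmf" where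
  "E N a b = map_pmf (E_cand N a) (pmf_of_set (E_acc N a b))"

type_synonym ctxt = "lpoly \<times> lpoly \<times> int"

definition Encrypt :: "int \<Rightarrow> (bool list \<Rightarrow> int) \<Rightarrow> bool list \<Rightarrow> bool \<Rightarrow> ctxt pmf" where
  "Encrypt N H idt b = map_pmf (\<lambda>(c, d). (c, d, H idt)) (E N (H idt) b)"

(* Eval(PP, x |-> <v,x>, psi_1..psi_l); None represents the abort symbol bottom *)
definition Eval :: "int \<Rightarrow> bool list \<Rightarrow> ctxt list \<Rightarrow> ctxt option pmf" where
  "Eval N v cts =
     (let a = snd (snd (hd cts)) in
      if (\<exists>ct\<in>set cts. snd (snd ct) \<noteq> a) then return_pmf None
      else
        (let J = filter (\<lambda>i. v ! i) [0..<length cts];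
             c' = fold (\<lambda>i acc. pmul N a acc (fst (cts ! i))) J (1, 0);
             d' = fold (\<lambda>i acc. pmul N (-a) acc (fst (snd (cts ! i)))) J (1, 0)
         in map_pmf (\<lambda>(cz, dz). Some (pmul N a c' cz, pmul N (-a) d' dz, a)) (E N a False)))"

definition ip2 :: "bool list \<Rightarrow> bool list \<Rightarrow> bool" where
  "ip2 v bs = odd (\<Sum>i<length v. (if v ! i \<and> bs ! i then 1 else 0 :: nat))"

definition SD :: "'a pmf \<Rightarrow> 'a pmf \<Rightarrow> real" where
  "SD P Q = (SUP A. \<bar>measure_pmf.prob P A - measure_pmf.prob Q A\<bar>)"

definition negligible :: "(nat \<Rightarrow> real) \<Rightarrow> bool" where
  "negligible f \<longleftrightarrow> (\<forall>c::nat. \<exists>n0. \<forall>n\<ge>n0. \<bar>f n\<bar> < 1 / real n ^ c)"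

(* support of Setup(1^lambda): distinct lambda-bit primes p, q with p = q = 3 mod 4 *)
definition setup_support :: "nat \<Rightarrow> (nat \<times> nat) set" where
  "setup_support lam = {(p, q). prime p \<and> prime q \<and> p \<noteq> q \<and> p mod 4 = 3 \<and> q mod 4 = 3 \<and>
      2 ^ (lam - 1) \<le> p \<and> p < 2 ^ lam \<and> 2 ^ (lam - 1) \<le> q \<and> q < 2 ^ lam}"

end

theory Submission
  imports Defs "HOL-Real_Asymp.Real_Asymp"
begin


lemma Legendre_vals: "Legendre a p \<in> {-1,0,1}"
  unfolding Legendre_def by auto

lemma Legendre_cong:
  assumes "[a = b] (mod p)" shows "Legendre a p = Legendre b p"
proof -
  have "QuadRes p a \<longleftrightarrow> QuadRes p b"
    unfolding QuadRes_def using assms cong_trans cong_sym by meson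
  moreover have "[a = 0] (mod p) \<longleftrightarrow> [b = 0] (mod p)"
    using assms cong_trans cong_sym by meson
  ultimately show ?thesis unfolding Legendre_def by simp
qed

lemma Legendre_zero_iff: "Legendre a p = 0 \<longleftrightarrow> p dvd a"
  unfolding Legendre_def by (auto simp: cong_0_iff)

lemma small_eq_from_cong:
  fixes x y p :: int
  assumes "x \<in> {-1,0,1}" "y \<in> {-1,0,1}" "2 < p" "[x = y] (mod p)"
  shows "x = y"
proof -
  have "p dvd (x - y)" using assms(4) by (simp add: cong_iff_dvd_diff)
  moreover have "\<bar>x - y\<bar> < p" using assms(1-3) by auto
  ultimately show ?thesis
  proof (cases "x = y")
    case False
    assume h: "p dvd (x - y)" "\<bar>x - y\<bar> < p"
    then have "x - y \<noteq> 0" using False by simp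
    then have "\<bar>p\<bar> \<le> \<bar>x - y\<bar>" using h(1) dvd_imp_le_int by blast
    then show ?thesis using h(2) by simp
  qed
qed

lemma Legendre_mult:
  assumes "prime p" "2 < p"
  shows "Legendre (a*b) (int p) = Legendre a (int p) * Legendre b (int p)"
proof -
  have e1: "[Legendre (a*b) (int p) = (a*b) ^ ((p - 1) div 2)] (mod int p)"
    using euler_criterion assms by blast
  have e2: "[Legendre a (int p) * Legendre b (int p) = a ^ ((p - 1) div 2) * b ^ ((p - 1) div 2)] (mod int p)"
    using euler_criterion assms cong_mult by blast
  have "[Legendre (a*b) (int p) = Legendre a (int p) * Legendre b (int p)] (mod int p)"
    using e1 e2 by (metis cong_sym cong_trans power_mult_distrib)
  moreover have "Legendre a (int p) * Legendre b (int p) \<in> {-1,0,1}"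
    using Legendre_vals[of a "int p"] Legendre_vals[of b "int p"] by auto
  ultimately show ?thesis
    using small_eq_from_cong[OF Legendre_vals, of "Legendre a (int p) * Legendre b (int p)" "int p"] assms by simp
qed

lemma Legendre_unit:
  assumes "\<not> p dvd a" shows "Legendre a p = 1 \<or> Legendre a p = -1"
  using assms Legendre_vals[of a p] Legendre_zero_iff[of a p] by auto

lemma Legendre_sq:
  assumes "prime (p::int)" "\<not> p dvd x" shows "Legendre (x^2) p = 1"
proof -
  have "\<not> p dvd x^2" using assms by (simp add: prime_dvd_power_iff)
  moreover have "QuadRes p (x^2)" unfolding QuadRes_def by (auto intro: cong_refl)
  ultimately show ?thesis unfolding Legendre_def by (simp add: cong_0_iff)
qed

lemma Legendre_minus_one:
  assumes "prime p" "p mod 4 = 3"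
  shows "Legendre (-1) (int p) = -1"
proof -
  have p2: "2 < p" using assms prime_ge_2_nat[of p] by presburger
  have e: "[Legendre (-1) (int p) = (-1) ^ ((p - 1) div 2)] (mod int p)"
    using euler_criterion assms p2 by blast
  have "odd ((p - 1) div 2)" using assms by presburger
  then have "[Legendre (-1) (int p) = -1] (mod int p)" using e by simp
  then show ?thesis using small_eq_from_cong[OF Legendre_vals, of "-1" "int p"] p2 by simp
qed


locale pq =
  fixes p q :: nat
  assumes pp: "prime p" and qp: "prime q" and pnq: "p \<noteq> q"
    and p3: "p mod 4 = 3" and q3: "q mod 4 = 3"
begin

abbreviation N :: int where "N \<equiv> int (p * q)"

lemma p2: "2 < p" using pp p3 prime_ge_2_nat[of p] by presburger
lemma q2: "2 < q" using qp q3 prime_ge_2_nat[of q] by presburger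
lemma ppi: "prime (int p)" using pp by simp
lemma qpi: "prime (int q)" using qp by simp
lemma N_gt: "N > 1"
proof -
  have "1 < p * q" using p2 q2 one_less_mult[of p q] by (simp add: mult.commute)
  then show ?thesis by linarith
qed

lemma jac: "Jacobi a N = Legendre a (int p) * Legendre a (int q)"
proof -
  have "prime_factorization (p * q) = {#p#} + {#q#}"
    using pp qp by (simp add: prime_factorization_mult prime_factorization_prime prime_gt_0_nat)
  moreover have "nat N = p * q" by (rule nat_int)
  ultimately show ?thesis unfolding Jacobi_def by simp
qed

lemma jac_mult: "Jacobi (a*b) N = Jacobi a N * Jacobi b N"
  unfolding jac using Legendre_mult[OF pp p2] Legendre_mult[OF qp q2] by simp

lemma cong_N_p: "[a = b] (mod N) \<Longrightarrow> [a = b] (mod int p)"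
  by (metis cong_modulus_mult of_nat_mult)
lemma cong_N_q: "[a = b] (mod N) \<Longrightarrow> [a = b] (mod int q)"
  by (metis cong_modulus_mult mult.commute of_nat_mult)

lemma jac_cong: "[a = b] (mod N) \<Longrightarrow> Jacobi a N = Jacobi b N"
  unfolding jac using Legendre_cong cong_N_p cong_N_q by metis

lemma cop_iff: "coprime a N \<longleftrightarrow> \<not> int p dvd a \<and> \<not> int q dvd a"
proof -
  have "coprime a N \<longleftrightarrow> coprime a (int p) \<and> coprime a (int q)" by simp
  also have "coprime a (int p) \<longleftrightarrow> \<not> int p dvd a"
    using ppi by (meson coprime_commute coprime_common_divisor dvd_refl not_prime_unit prime_imp_coprime)
  also have "coprime a (int q) \<longleftrightarrow> \<not> int q dvd a"
    using qpi by (meson coprime_commute coprime_common_divisor dvd_refl not_prime_unit prime_imp_coprime)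
  finally show ?thesis .
qed

lemma jac_unit: "coprime a N \<Longrightarrow> Jacobi a N = 1 \<or> Jacobi a N = -1"
  unfolding jac cop_iff using Legendre_unit[of "int p" a] Legendre_unit[of "int q" a] by auto

lemma jac_zero: "\<not> coprime a N \<Longrightarrow> Jacobi a N = 0"
  unfolding jac cop_iff using Legendre_zero_iff by auto

lemma jac_one_iff: "Jacobi a N \<noteq> 0 \<longleftrightarrow> coprime a N"
  using jac_unit jac_zero by fastforce

lemma jac_sq: "coprime x N \<Longrightarrow> Jacobi (x^2) N = 1"
  unfolding jac cop_iff using Legendre_sq ppi qpi by auto

lemma exists_nonres: "\<exists>z. 0 \<le> z \<and> z < N \<and> coprime z N \<and> Jacobi z N = -1"
proof -
  have "coprime (int p) (int q)" using pp qp pnq by (simp add: primes_coprime)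
  then obtain x where x: "[x = -1] (mod int p)" "[x = 1] (mod int q)"
    using binary_chinese_remainder_int by blast
  define z where "z = x mod N"
  have zN: "[z = x] (mod N)" unfolding z_def by (simp add: cong_def)
  have z1: "[z = -1] (mod int p)" using cong_N_p[OF zN] x(1) cong_trans by blast
  have z2: "[z = 1] (mod int q)" using cong_N_q[OF zN] x(2) cong_trans by blast
  have l1: "Legendre z (int p) = -1" using Legendre_cong[OF z1] Legendre_minus_one[OF pp p3] by simp
  have l2: "Legendre z (int q) = 1"
  proof -
    have "Legendre 1 (int q) = Legendre (1^2) (int q)" by simp
    also have "\<dots> = 1" using Legendre_sq[OF qpi, of 1] qpi q2 by simp
    finally show ?thesis using Legendre_cong[OF z2] by simp
  qed
  have "Jacobi z N = -1" using l1 l2 jac by simp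
  moreover then have "Jacobi z N \<noteq> 0" by simp
  then have "coprime z N" using jac_one_iff by blast
  moreover have "0 \<le> z" "z < N" using N_gt unfolding z_def by auto
  ultimately show ?thesis by blast
qed

end


definition phi :: "int \<Rightarrow> int \<Rightarrow> int \<times> int \<Rightarrow> int \<times> int" where
  "phi N s u = ((fst u + s * snd u ^ 2 * inv_mod N (fst u)) mod N, (2 * snd u) mod N)"

definition rm :: "int \<Rightarrow> int \<times> int \<Rightarrow> int \<times> int \<Rightarrow> int \<times> int" where
  "rm s x y = (fst x * fst y + s * snd x * snd y, fst x * snd y + snd x * fst y)"

definition nrm :: "int \<Rightarrow> int \<times> int \<Rightarrow> int" where
  "nrm s x = fst x ^ 2 - s * snd x ^ 2"

definition pc :: "int \<Rightarrow> int \<times> int \<Rightarrow> int \<times> int \<Rightarrow> bool" where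
  "pc N x y \<longleftrightarrow> [fst x = fst y] (mod N) \<and> [snd x = snd y] (mod N)"

lemma E_cand_phi: "E_cand N a (t1, t2, g1, g2) = (phi N a (t1, g1), phi N (-a) (t2, g2))"
  unfolding E_cand_def phi_def by simp

lemma pmul_rm: "pmul N s c e = (fst (rm s c e) mod N, snd (rm s c e) mod N)"
  unfolding pmul_def rm_def by simp

lemma nrm_mult: "nrm s (rm s x y) = nrm s x * nrm s y"
  unfolding nrm_def rm_def by (simp add: power2_eq_square algebra_simps)

lemma rm_comm: "rm s x y = rm s y x"
  unfolding rm_def by (simp add: algebra_simps)
lemma rm_assoc: "rm s (rm s x y) z = rm s x (rm s y z)"
  unfolding rm_def by (simp add: algebra_simps)

lemma cong_unit_cancel:
  fixes N :: int
  assumes "coprime k N" "[k * x = k * y] (mod N)" shows "[x = y] (mod N)"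
  using assms cong_mult_lcancel by blast

lemma mod_eq_of_cong:
  fixes N :: int
  assumes "N > 0" "0 \<le> x" "x < N" "[y = x] (mod N)" shows "y mod N = x"
proof -
  have "y mod N = x mod N" using assms(4) by (simp add: Cong.cong_def)
  then show ?thesis using assms(1-3) by simp
qed

context pq begin

lemma inv_mod_props:
  assumes "coprime t N"
  shows "0 \<le> inv_mod N t" "inv_mod N t < N" "[t * inv_mod N t = 1] (mod N)"
proof -
  obtain x where x: "[t * x = 1] (mod N)" using assms cong_solve_coprime_int by blast
  let ?P = "\<lambda>u. 0 \<le> u \<and> u < N \<and> [t * u = 1] (mod N)"
  have "[x mod N = x] (mod N)" by (simp add: Cong.cong_def)
  then have "[t * (x mod N) = t * x] (mod N)" by (rule cong_mult[OF cong_refl])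
  then have "?P (x mod N)" using x N_gt cong_trans by auto
  then have "?P (inv_mod N t)" unfolding inv_mod_def by (rule someI)
  then show "0 \<le> inv_mod N t" "inv_mod N t < N" "[t * inv_mod N t = 1] (mod N)" by auto
qed

lemma inv_mod_coprime:
  assumes "coprime t N" shows "coprime (inv_mod N t) N"
proof -
  have "[t * inv_mod N t = 1] (mod N)" using inv_mod_props assms by blast
  then have "coprime (t * inv_mod N t) N" using cong_imp_coprime cong_sym coprime_1_left by blast
  then show ?thesis by simp
qed

lemma jac_inv:
  assumes "coprime t N" shows "Jacobi (inv_mod N t) N = Jacobi t N"
proof -
  have "[t * inv_mod N t = 1] (mod N)" using inv_mod_props assms by blast
  then have "Jacobi t N * Jacobi (inv_mod N t) N = Jacobi 1 N" using jac_cong jac_mult by metis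
  moreover have "Jacobi 1 N = 1" using jac_sq[of 1] by simp
  ultimately show ?thesis using jac_unit[OF assms] by (auto simp: algebra_simps)
qed

lemma phi_rep:
  assumes "coprime t N"
  shows "pc N (rm s (t, 0) (phi N s (t, g))) (rm s (t, g) (t, g))"
proof -
  let ?t' = "inv_mod N t"
  have h: "[t * ?t' = 1] (mod N)" using inv_mod_props assms by blast
  have c0: "[fst (phi N s (t, g)) = t + s * g^2 * ?t'] (mod N)" unfolding phi_def by (simp add: Cong.cong_def)
  have c1: "[snd (phi N s (t, g)) = 2 * g] (mod N)" unfolding phi_def by (simp add: Cong.cong_def)
  have "[t * fst (phi N s (t, g)) = t * t + s * g * g] (mod N)"
    using h c0 unfolding cong_iff_dvd_diff dvd_def by Groebner_Basis.algebra
  moreover have "[t * snd (phi N s (t, g)) = t * g + g * t] (mod N)"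
    using c1 unfolding cong_iff_dvd_diff dvd_def by Groebner_Basis.algebra
  ultimately show ?thesis unfolding pc_def rm_def by simp
qed

lemma GT_phi:
  assumes "coprime t N"
  shows "GT N s (phi N s (t, g)) = 1 \<longleftrightarrow> coprime (t^2 - s * g^2) N"
proof -
  let ?t' = "inv_mod N t"
  have h: "[t * ?t' = 1] (mod N)" using inv_mod_props assms by blast
  have c0: "[fst (phi N s (t, g)) = t + s * g^2 * ?t'] (mod N)" unfolding phi_def by (simp add: Cong.cong_def)
  have c1: "[snd (phi N s (t, g)) = 2 * g] (mod N)" unfolding phi_def by (simp add: Cong.cong_def)
  have "[fst (phi N s (t, g)) ^ 2 - snd (phi N s (t, g)) ^ 2 * s = (?t' * (t^2 - s * g^2))^2] (mod N)"
    using h c0 c1 unfolding cong_iff_dvd_diff dvd_def by Groebner_Basis.algebra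
  then have "GT N s (phi N s (t, g)) = Jacobi ((?t' * (t^2 - s * g^2))^2) N"
    unfolding GT_def using jac_cong by blast
  also have "\<dots> = 1 \<longleftrightarrow> coprime (t^2 - s * g^2) N"
  proof
    assume a: "Jacobi ((?t' * (t^2 - s * g^2))^2) N = 1"
    then have "coprime ((?t' * (t^2 - s * g^2))^2) N" using jac_one_iff by fastforce
    then show "coprime (t^2 - s * g^2) N" by simp
  next
    assume "coprime (t^2 - s * g^2) N"
    then have "coprime (?t' * (t^2 - s * g^2)) N" using inv_mod_coprime[OF assms] by simp
    then show "Jacobi ((?t' * (t^2 - s * g^2))^2) N = 1" by (rule jac_sq)
  qed
  finally show ?thesis .
qed

end


definition psi :: "int \<Rightarrow> int \<Rightarrow> int \<times> int \<Rightarrow> int \<Rightarrow> int \<times> int \<Rightarrow> int \<times> int" where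
  "psi N s w k u = ((k * fst (rm s w u) ^ 2 * inv_mod N (fst u)) mod N,
                    (k * fst (rm s w u) * snd (rm s w u) * inv_mod N (fst u)) mod N)"

definition Cpart :: "int \<Rightarrow> int \<Rightarrow> int \<Rightarrow> (int \<times> int) set" where
  "Cpart N s sg = {u. fst u \<in> unitsJ N sg \<and> snd u \<in> units_mod N \<and> GT N s (phi N s u) = 1}"

definition good :: "int \<Rightarrow> int \<Rightarrow> int \<times> int \<Rightarrow> int \<times> int \<Rightarrow> bool" where
  "good N s w u \<longleftrightarrow> coprime (fst (rm s w u)) N \<and> coprime (snd (rm s w u)) N"

context pq begin

lemma cop_cong: "[a = b] (mod N) \<Longrightarrow> coprime b N \<Longrightarrow> coprime a N"
  using cong_imp_coprime cong_sym by blast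

lemma mod_range: "0 \<le> x mod N" "x mod N < N" using N_gt by auto

lemma Cpart_D:
  assumes "(t, g) \<in> Cpart N s sg"
  shows "coprime t N" "0 \<le> t" "t < N" "Jacobi t N = sg" "coprime g N" "0 \<le> g" "g < N"
    "coprime (t^2 - s * g^2) N"
  using assms GT_phi[of t s g] unfolding Cpart_def unitsJ_def units_mod_def by auto

lemma Cpart_I:
  assumes "coprime t N" "0 \<le> t" "t < N" "Jacobi t N = sg" "coprime g N" "0 \<le> g" "g < N"
    "coprime (t^2 - s * g^2) N"
  shows "(t, g) \<in> Cpart N s sg"
  using assms GT_phi[of t s g] unfolding Cpart_def unitsJ_def units_mod_def by auto

lemma psi_main:
  assumes cw: "coprime (nrm s w) N" and ck: "coprime k N"
    and u: "u \<in> Cpart N s sg" and gd: "good N s w u"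
  shows "psi N s w k u \<in> Cpart N s (Jacobi k N * sg)"
    and "\<And>W. pc N (rm s W w) (1, 0) \<Longrightarrow> good N s W (psi N s w k u)"
    and "\<And>W k2. pc N (rm s W w) (1, 0) \<Longrightarrow> [k2 * k = 1] (mod N) \<Longrightarrow> psi N s W k2 (psi N s w k u) = u"
    and "\<And>c. [fst c = k * fst (rm s w w)] (mod N) \<Longrightarrow> [snd c = k * snd (rm s w w)] (mod N) \<Longrightarrow>
            phi N s (psi N s w k u) = pmul N s c (phi N s u)"
proof -
  obtain t g where ug: "u = (t, g)" by (cases u)
  obtain w0 w1 where wg: "w = (w0, w1)" by (cases w)
  define t' where "t' = inv_mod N t"
  define a where "a = w0 * t + s * w1 * g"
  define b where "b = w0 * g + w1 * t"
  define T where "T = (k * a^2 * t') mod N"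
  define G where "G = (k * a * b * t') mod N"
  note tu = Cpart_D[OF u[unfolded ug]]
  have tt: "[t * t' = 1] (mod N)" using inv_mod_props tu(1) unfolding t'_def by blast
  have ct': "coprime t' N" using inv_mod_coprime tu(1) unfolding t'_def by blast
  have ca: "coprime a N" and cb: "coprime b N"
    using gd unfolding good_def ug wg rm_def a_def b_def by (auto simp: algebra_simps)
  have psi_eq: "psi N s w k u = (T, G)"
    unfolding psi_def ug wg rm_def T_def G_def a_def b_def t'_def by (simp add: algebra_simps)
  have Tc: "[T = k * a^2 * t'] (mod N)" unfolding T_def by (simp add: Cong.cong_def)
  have Gc: "[G = k * a * b * t'] (mod N)" unfolding G_def by (simp add: Cong.cong_def)
  have cT: "coprime T N" using cop_cong[OF Tc] ck ca ct' by simp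
  have cG: "coprime G N" using cop_cong[OF Gc] ck ca cb ct' by simp
  have nab: "a^2 - s * b^2 = nrm s w * (t^2 - s * g^2)"
    unfolding a_def b_def nrm_def wg by (simp add: power2_eq_square algebra_simps)
  have "[T^2 - s * G^2 = (k * a * t')^2 * (a^2 - s * b^2)] (mod N)"
    using Tc Gc unfolding cong_iff_dvd_diff dvd_def by Groebner_Basis.algebra
  then have cN: "coprime (T^2 - s * G^2) N"
    using cop_cong ck ca ct' cw tu(8) unfolding nab by simp
  have JT: "Jacobi T N = Jacobi k N * sg"
  proof -
    have "Jacobi T N = Jacobi k N * Jacobi (a^2) N * Jacobi t' N"
      using jac_cong[OF Tc] jac_mult by simp
    also have "Jacobi (a^2) N = 1" using jac_sq ca by blast
    also have "Jacobi t' N = sg" using jac_inv tu(1) tu(4) unfolding t'_def by simp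
    finally show ?thesis by simp
  qed
  show "psi N s w k u \<in> Cpart N s (Jacobi k N * sg)"
    unfolding psi_eq using Cpart_I[OF cT _ _ JT cG _ _ cN] mod_range unfolding T_def G_def by auto
  define l where "l = k * a * t'"
  have cl: "coprime l N" unfolding l_def using ck ca ct' by simp
  have W_facts: "[W0 * T + s * W1 * G = l * t] (mod N) \<and> [W0 * G + W1 * T = l * g] (mod N)"
    if hW: "pc N (rm s (W0, W1) w) (1, 0)" for W0 W1
  proof -
    have h1: "[W0 * w0 + s * W1 * w1 = 1] (mod N)" and h2: "[W0 * w1 + W1 * w0 = 0] (mod N)"
      using hW unfolding pc_def rm_def wg by auto
    have g1: "[W0 * T + s * W1 * G = l * t] (mod N)"
      using h1 h2 Tc Gc unfolding l_def a_def b_def cong_iff_dvd_diff dvd_def by Groebner_Basis.algebra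
    have g2: "[W0 * G + W1 * T = l * g] (mod N)"
      using h1 h2 Tc Gc unfolding l_def a_def b_def cong_iff_dvd_diff dvd_def by Groebner_Basis.algebra
    show ?thesis using g1 g2 by blast
  qed
  show "good N s W (psi N s w k u)" if "pc N (rm s W w) (1, 0)" for W
  proof -
    obtain W0 W1 where Wg: "W = (W0, W1)" by (cases W)
    note f = W_facts[OF that[unfolded Wg]]
    have "coprime (l * t) N" "coprime (l * g) N" using cl tu by auto
    then show ?thesis unfolding good_def psi_eq Wg rm_def fst_conv snd_conv
      using cop_cong f by blast
  qed
  show "psi N s W k2 (psi N s w k u) = u"
    if hW: "pc N (rm s W w) (1, 0)" and hk: "[k2 * k = 1] (mod N)" for W k2
  proof -
    define T' where "T' = inv_mod N T"
    have TT: "[T * T' = 1] (mod N)" using inv_mod_props cT unfolding T'_def by blast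
    obtain W0 W1 where Wg: "W = (W0, W1)" by (cases W)
    have g1: "[W0 * T + s * W1 * G = l * t] (mod N)" and g2: "[W0 * G + W1 * T = l * g] (mod N)"
      using W_facts[OF hW[unfolded Wg]] by auto
    have r1: "[k2 * (W0 * T + s * W1 * G)^2 * T' = t] (mod N)"
      using g1 hk TT Tc tt unfolding l_def cong_iff_dvd_diff dvd_def by Groebner_Basis.algebra
    have r2: "[k2 * (W0 * T + s * W1 * G) * (W0 * G + W1 * T) * T' = g] (mod N)"
      using g1 g2 hk TT Tc tt unfolding l_def cong_iff_dvd_diff dvd_def by Groebner_Basis.algebra
    have "psi N s W k2 (T, G) = ((k2 * (W0 * T + s * W1 * G)^2 * T') mod N,
        (k2 * (W0 * T + s * W1 * G) * (W0 * G + W1 * T) * T') mod N)"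
      unfolding psi_def Wg rm_def T'_def by simp
    also have "\<dots> = (t, g)"
      using mod_eq_of_cong[OF _ _ _ r1] mod_eq_of_cong[OF _ _ _ r2] tu N_gt by simp
    finally show ?thesis using psi_eq ug by simp
  qed
  show "phi N s (psi N s w k u) = pmul N s c (phi N s u)"
    if c1: "[fst c = k * fst (rm s w w)] (mod N)" and c2: "[snd c = k * snd (rm s w w)] (mod N)" for c
  proof -
    obtain c0 c1 where cg: "c = (c0, c1)" by (cases c)
    define T' where "T' = inv_mod N T"
    have TT: "[T * T' = 1] (mod N)" using inv_mod_props cT unfolding T'_def by blast
    have h0: "[c0 = k * (w0 * w0 + s * w1 * w1)] (mod N)" and h1: "[c1 = k * (w0 * w1 + w1 * w0)] (mod N)"
      using c1 c2 unfolding cg wg rm_def by auto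
    define f0 where "f0 = fst (phi N s u)"
    define f1 where "f1 = snd (phi N s u)"
    have pf0: "[f0 = t + s * g^2 * t'] (mod N)" unfolding f0_def phi_def ug t'_def by (simp add: Cong.cong_def)
    have pf1: "[f1 = 2 * g] (mod N)" unfolding f1_def phi_def ug by (simp add: Cong.cong_def)
    have s1: "[a * (T + s * G^2 * T') = k * a * (t' * (a^2 + s * b^2))] (mod N)"
      using TT Tc Gc unfolding cong_iff_dvd_diff dvd_def by Groebner_Basis.algebra
    have s2: "[t' * (a^2 + s * b^2) = (w0^2 + s * w1^2) * (t + s * g^2 * t') + s * (2 * w0 * w1) * (2 * g)] (mod N)"
      using tt unfolding a_def b_def cong_iff_dvd_diff dvd_def by Groebner_Basis.algebra
    have s3: "[c0 * f0 + s * c1 * f1 = k * ((w0^2 + s * w1^2) * (t + s * g^2 * t') + s * (2 * w0 * w1) * (2 * g))] (mod N)"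
      using h0 h1 pf0 pf1 unfolding cong_iff_dvd_diff dvd_def by Groebner_Basis.algebra
    have "[a * (T + s * G^2 * T') = a * (c0 * f0 + s * c1 * f1)] (mod N)"
      using s1 s2 s3 unfolding cong_iff_dvd_diff dvd_def by Groebner_Basis.algebra
    then have e1: "[T + s * G^2 * T' = c0 * f0 + s * c1 * f1] (mod N)"
      using cong_unit_cancel ca by blast
    have s2': "[t' * (2 * a * b) = (w0^2 + s * w1^2) * (2 * g) + (2 * w0 * w1) * (t + s * g^2 * t')] (mod N)"
      using tt unfolding a_def b_def cong_iff_dvd_diff dvd_def by Groebner_Basis.algebra
    have s3': "[c0 * f1 + c1 * f0 = k * ((w0^2 + s * w1^2) * (2 * g) + (2 * w0 * w1) * (t + s * g^2 * t'))] (mod N)"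
      using h0 h1 pf0 pf1 unfolding cong_iff_dvd_diff dvd_def by Groebner_Basis.algebra
    have e2: "[2 * G = c0 * f1 + c1 * f0] (mod N)"
      using Gc s2' s3' unfolding cong_iff_dvd_diff dvd_def by Groebner_Basis.algebra
    have "phi N s (T, G) = ((T + s * G^2 * T') mod N, (2 * G) mod N)"
      unfolding phi_def T'_def by simp
    also have "\<dots> = pmul N s c (phi N s u)"
      unfolding pmul_def cg f0_def[symmetric] f1_def[symmetric]
      using e1 e2 by (simp add: Cong.cong_def algebra_simps)
    finally show ?thesis unfolding psi_eq .
  qed
qed

end


lemma finite_int_range[simp]: "finite {x::int. 0 \<le> x \<and> x < n \<and> Q x}"
  by (rule finite_subset[of _ "{0..<n}"]) auto

lemma count_class:
  fixes P M :: int and r :: int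
  assumes P0: "P > 0" and M0: "M \<ge> 0"
  shows "card {x \<in> {0..<P*M}. [x = r] (mod P)} \<le> nat M"
proof -
  let ?S = "{x \<in> {0..<P*M}. [x = r] (mod P)}"
  have inj: "inj_on (\<lambda>x. x div P) ?S"
  proof (rule inj_onI)
    fix x y assume x: "x \<in> ?S" and y: "y \<in> ?S" and e: "x div P = y div P"
    have "[x = r] (mod P)" "[y = r] (mod P)" using x y by simp_all
    then have "x mod P = y mod P" unfolding Cong.cong_def by simp
    then show "x = y" using e by (metis div_mult_mod_eq)
  qed
  have sub: "(\<lambda>x. x div P) ` ?S \<subseteq> {0..<M}"
  proof
    fix z assume "z \<in> (\<lambda>x. x div P) ` ?S"
    then obtain x where x: "x \<in> ?S" and z: "z = x div P" by blast
    have x0: "0 \<le> x" and x1: "x < P * M" using x by simp_all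
    have "0 \<le> z" unfolding z using P0 x0 by (simp add: pos_imp_zdiv_nonneg_iff)
    moreover have "x div P * P \<le> x" using div_mult_mod_eq[of x P] pos_mod_sign[of P x] P0 by linarith
    then have "z * P < M * P" unfolding z using x1 by (simp add: mult.commute)
    then have "z < M" using P0 by (simp add: mult_less_cancel_right)
    ultimately show "z \<in> {0..<M}" by simp
  qed
  have c1: "card ((\<lambda>x. x div P) ` ?S) = card ?S" using inj by (rule card_image)
  have c2: "card ((\<lambda>x. x div P) ` ?S) \<le> card {0..<M}" using sub by (rule card_mono[rotated]) simp
  show ?thesis using c1 c2 by simp
qed

lemma count_lin_fiber:
  fixes P M c d :: int
  assumes P: "prime P" and M: "M \<ge> 0" and c: "\<not> P dvd c"
  shows "card {x \<in> {0..<P*M}. P dvd (c * x + d)} \<le> nat M"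
proof (cases "\<exists>x0. P dvd (c * x0 + d)")
  case False
  then show ?thesis by simp
next
  case True
  then obtain x0 where x0: "P dvd (c * x0 + d)" by blast
  have "{x \<in> {0..<P*M}. P dvd (c * x + d)} \<subseteq> {x \<in> {0..<P*M}. [x = x0] (mod P)}"
  proof safe
    fix x assume "P dvd (c * x + d)"
    then have "P dvd (c * x + d) - (c * x0 + d)" using x0 by (rule dvd_diff)
    then have "P dvd c * (x - x0)" by (simp add: algebra_simps)
    then have "P dvd (x - x0)" using P c prime_dvd_mult_iff by blast
    then show "[x = x0] (mod P)" by (simp add: cong_iff_dvd_diff)
  qed
  then have "card {x \<in> {0..<P*M}. P dvd (c * x + d)} \<le> card {x \<in> {0..<P*M}. [x = x0] (mod P)}"
    by (intro card_mono) auto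
  also have "\<dots> \<le> nat M" using count_class[of P M x0] P M prime_gt_0_int by blast
  finally show ?thesis .
qed

lemma card_pairs_le:
  fixes A :: "int set" and F :: "int \<Rightarrow> int set"
  assumes "finite A" "\<And>g. g \<in> A \<Longrightarrow> finite (F g)" "\<And>g. g \<in> A \<Longrightarrow> card (F g) \<le> m"
  shows "card {(t, g). g \<in> A \<and> t \<in> F g} \<le> card A * m"
proof -
  have eq: "{(t, g). g \<in> A \<and> t \<in> F g} = (\<lambda>(g, t). (t, g)) ` (SIGMA g:A. F g)" by auto
  have "card {(t, g). g \<in> A \<and> t \<in> F g} \<le> card (SIGMA g:A. F g)"
    unfolding eq by (rule card_image_le) (use assms in auto)
  also have "\<dots> = (\<Sum>g\<in>A. card (F g))" using assms by (simp add: card_SigmaI)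
  also have "\<dots> \<le> (\<Sum>g\<in>A. m)" using assms by (intro sum_mono) auto
  also have "\<dots> = card A * m" by simp
  finally show ?thesis .
qed

lemma card_pairs_le2:
  fixes A :: "int set" and F :: "int \<Rightarrow> int set"
  assumes "finite A" "\<And>t. t \<in> A \<Longrightarrow> finite (F t)" "\<And>t. t \<in> A \<Longrightarrow> card (F t) \<le> m"
  shows "card {(t, g). t \<in> A \<and> g \<in> F t} \<le> card A * m"
proof -
  have eq: "{(t, g). t \<in> A \<and> g \<in> F t} = (SIGMA t:A. F t)" by auto
  have "card (SIGMA t:A. F t) = (\<Sum>t\<in>A. card (F t))" using assms by (simp add: card_SigmaI)
  also have "\<dots> \<le> (\<Sum>t\<in>A. m)" using assms by (intro sum_mono) auto
  also have "\<dots> = card A * m" by simp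
  finally show ?thesis unfolding eq .
qed

lemma count_lin_pairs:
  fixes P M c1 c2 :: int
  assumes P: "prime P" and M: "M \<ge> 0" and c: "\<not> (P dvd c1 \<and> P dvd c2)"
  shows "card {(t, g). t \<in> {0..<P*M} \<and> g \<in> {0..<P*M} \<and> P dvd (c1 * t + c2 * g)} \<le> nat (P*M) * nat M"
proof (cases "P dvd c1")
  case False
  have "{(t, g). t \<in> {0..<P*M} \<and> g \<in> {0..<P*M} \<and> P dvd (c1 * t + c2 * g)} =
        {(t, g). g \<in> {0..<P*M} \<and> t \<in> {x \<in> {0..<P*M}. P dvd (c1 * x + c2 * g)}}" by blast
  also have "card \<dots> \<le> card {0..<P*M} * nat M"
    by (rule card_pairs_le) (use count_lin_fiber[OF P M False] in auto)
  finally show ?thesis by simp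
next
  case True
  then have c2: "\<not> P dvd c2" using c by blast
  have "{(t, g). t \<in> {0..<P*M} \<and> g \<in> {0..<P*M} \<and> P dvd (c1 * t + c2 * g)} =
        {(t, g). t \<in> {0..<P*M} \<and> g \<in> {x \<in> {0..<P*M}. P dvd (c2 * x + c1 * t)}}"
    by (simp add: add.commute)
  also have "card \<dots> \<le> card {0..<P*M} * nat M"
    by (rule card_pairs_le2) (use count_lin_fiber[OF P M c2] in auto)
  finally show ?thesis by simp
qed

lemma count_quad_fiber:
  fixes P M s t :: int
  assumes P: "prime P" and M: "M \<ge> 0" and s: "\<not> P dvd s"
  shows "card {g \<in> {0..<P*M}. P dvd (t^2 - s * g^2)} \<le> 2 * nat M"
proof (cases "\<exists>g0. P dvd (t^2 - s * g0^2)")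
  case False
  then show ?thesis by simp
next
  case True
  then obtain g0 where g0: "P dvd (t^2 - s * g0^2)" by blast
  have "{g \<in> {0..<P*M}. P dvd (t^2 - s * g^2)} \<subseteq>
        {x \<in> {0..<P*M}. [x = g0] (mod P)} \<union> {x \<in> {0..<P*M}. [x = -g0] (mod P)}"
  proof safe
    fix g assume g: "P dvd (t^2 - s * g^2)" and n: "\<not> [g = - g0] (mod P)"
    have "P dvd (t^2 - s * g0^2) - (t^2 - s * g^2)" using g g0 by (rule dvd_diff[rotated])
    then have "P dvd s * ((g - g0) * (g + g0))" by (simp add: algebra_simps power2_eq_square)
    then have "P dvd (g - g0) * (g + g0)" using P s prime_dvd_mult_iff by blast
    moreover have "\<not> P dvd (g + g0)" using n by (simp add: cong_iff_dvd_diff)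
    ultimately have "P dvd (g - g0)" using P prime_dvd_mult_iff by blast
    then show "[g = g0] (mod P)" by (simp add: cong_iff_dvd_diff)
  qed
  then have "card {g \<in> {0..<P*M}. P dvd (t^2 - s * g^2)} \<le>
        card ({x \<in> {0..<P*M}. [x = g0] (mod P)} \<union> {x \<in> {0..<P*M}. [x = -g0] (mod P)})"
    by (intro card_mono) auto
  also have "\<dots> \<le> card {x \<in> {0..<P*M}. [x = g0] (mod P)} + card {x \<in> {0..<P*M}. [x = -g0] (mod P)}"
    by (rule card_Un_le)
  also have "\<dots> \<le> nat M + nat M"
    using count_class[of P M g0] count_class[of P M "-g0"] P M prime_gt_0_int by (simp add: add_mono)
  finally show ?thesis by simp
qed


context pq begin

lemma N_eq: "N = int p * int q" by simp

lemma units_sub: "units_mod N \<subseteq> {0..<N}" unfolding units_mod_def by auto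
lemma units_fin: "finite (units_mod N)" using units_sub finite_subset by blast
lemma unitsJ_sub: "unitsJ N sg \<subseteq> units_mod N" unfolding unitsJ_def by auto
lemma unitsJ_fin: "finite (unitsJ N sg)" using unitsJ_sub units_fin finite_subset by blast

lemma card_units: "card (units_mod N) + p + q \<ge> p * q"
proof -
  let ?A = "{x \<in> {0..<int p * int q}. [x = 0] (mod int p)}"
  let ?B = "{x \<in> {0..<int q * int p}. [x = 0] (mod int q)}"
  have sub: "{0..<N} \<subseteq> units_mod N \<union> ?A \<union> ?B"
  proof
    fix x assume x: "x \<in> {0..<N}"
    show "x \<in> units_mod N \<union> ?A \<union> ?B"
    proof (cases "coprime x N")
      case True then show ?thesis using x unfolding units_mod_def by auto
    next
      case False
      then have "int p dvd x \<or> int q dvd x" using cop_iff by blast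
      then show ?thesis using x by (auto simp: cong_0_iff mult.commute)
    qed
  qed
  have cA: "card ?A \<le> q" using count_class[of "int p" "int q" 0] p2 by simp
  have cB: "card ?B \<le> p" using count_class[of "int q" "int p" 0] q2 by simp
  have "p * q = card {0..<N}" using card_atLeastLessThan_int[of 0 N] nat_int[of "p*q"] by (simp del: of_nat_mult)
  also have "\<dots> \<le> card (units_mod N \<union> ?A \<union> ?B)" using sub units_fin by (intro card_mono) auto
  also have "\<dots> \<le> card (units_mod N) + card ?A + card ?B"
    by (meson card_Un_le add_le_mono1 le_trans)
  finally show ?thesis using cA cB by linarith
qed

lemma unitsJ_union: "unitsJ N 1 \<union> unitsJ N (-1) = units_mod N"
  unfolding unitsJ_def units_mod_def using jac_unit by auto

lemma unitsJ_disj: "unitsJ N 1 \<inter> unitsJ N (-1) = {}"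
  unfolding unitsJ_def by auto

lemma mult_map_inj:
  assumes z: "coprime z N" and sgz: "Jacobi z N = -1" and sg: "sg = 1 \<or> sg = -1"
  shows "card (unitsJ N sg) \<le> card (unitsJ N (- sg))"
proof -
  let ?f = "\<lambda>x. (z * x) mod N"
  have inj: "inj_on ?f (unitsJ N sg)"
  proof (rule inj_onI)
    fix x y assume x: "x \<in> unitsJ N sg" and y: "y \<in> unitsJ N sg" and e: "?f x = ?f y"
    have "[z * x = z * y] (mod N)" using e by (simp add: Cong.cong_def)
    then have "[x = y] (mod N)" using z cong_unit_cancel by blast
    then show "x = y" using x y unfolding unitsJ_def units_mod_def Cong.cong_def by auto
  qed
  have img: "?f ` unitsJ N sg \<subseteq> unitsJ N (- sg)"
  proof
    fix y assume "y \<in> ?f ` unitsJ N sg"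
    then obtain x where x: "x \<in> unitsJ N sg" and y: "y = ?f x" by blast
    have cx: "coprime x N" and jx: "Jacobi x N = sg" using x unfolding unitsJ_def units_mod_def by auto
    have cg: "[y = z * x] (mod N)" unfolding y by (simp add: Cong.cong_def)
    have "coprime y N" using cop_cong[OF cg] z cx by simp
    moreover have "Jacobi y N = - sg" using jac_cong[OF cg] jac_mult sgz jx by simp
    moreover have "0 \<le> y" "y < N" unfolding y using mod_range by auto
    ultimately show "y \<in> unitsJ N (- sg)" unfolding unitsJ_def units_mod_def by auto
  qed
  show ?thesis using card_inj_on_le[OF inj img unitsJ_fin] .
qed

lemma card_unitsJ:
  assumes sg: "sg = 1 \<or> sg = -1"
  shows "2 * card (unitsJ N sg) = card (units_mod N)"
proof -
  obtain z where z: "coprime z N" "Jacobi z N = -1" using exists_nonres by blast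
  have "card (unitsJ N 1) = card (unitsJ N (-1))"
    using mult_map_inj[OF z, of 1] mult_map_inj[OF z, of "-1"] by simp
  moreover have "card (units_mod N) = card (unitsJ N 1) + card (unitsJ N (-1))"
    unfolding unitsJ_union[symmetric] using card_Un_disjoint[OF unitsJ_fin unitsJ_fin unitsJ_disj] .
  ultimately show ?thesis using sg by auto
qed

end


context pq begin

lemma Cpart_sub: "Cpart N s sg \<subseteq> {0..<N} \<times> {0..<N}"
  unfolding Cpart_def unitsJ_def units_mod_def by auto
lemma Cpart_fin: "finite (Cpart N s sg)"
  using Cpart_sub by (rule finite_subset) simp

lemma not_dvd_of_cop: "coprime s N \<Longrightarrow> \<not> int p dvd s \<and> \<not> int q dvd s"
  using cop_iff by blast

lemma card_Cpart_lower:
  assumes cs: "coprime s N" and sg: "sg = 1 \<or> sg = -1"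
  shows "card (unitsJ N sg) * (card (units_mod N) - 2 * (p + q)) \<le> card (Cpart N s sg)"
proof -
  define B where "B t = {g \<in> {0..<int p * int q}. int p dvd (t^2 - s * g^2)} \<union>
                        {g \<in> {0..<int q * int p}. int q dvd (t^2 - s * g^2)}" for t
  have finB: "finite (B t)" for t unfolding B_def by auto
  have cB: "card (B t) \<le> 2 * (p + q)" for t
  proof -
    have "card (B t) \<le> card {g \<in> {0..<int p * int q}. int p dvd (t^2 - s * g^2)} +
                         card {g \<in> {0..<int q * int p}. int q dvd (t^2 - s * g^2)}"
      unfolding B_def by (rule card_Un_le)
    also have "\<dots> \<le> 2 * nat (int q) + 2 * nat (int p)"
      using count_quad_fiber[of "int p" "int q" s t] count_quad_fiber[of "int q" "int p" s t]
        not_dvd_of_cop[OF cs] ppi qpi by (intro add_mono) auto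
    finally show ?thesis by simp
  qed
  have sub: "(SIGMA t:unitsJ N sg. units_mod N - B t) \<subseteq> Cpart N s sg"
  proof safe
    fix t g assume t: "t \<in> unitsJ N sg" and g: "g \<in> units_mod N" and nb: "g \<notin> B t"
    have g0: "0 \<le> g" "g < N" and cg: "coprime g N" using g unfolding units_mod_def by auto
    have "\<not> int p dvd (t^2 - s * g^2)" "\<not> int q dvd (t^2 - s * g^2)"
      using nb g0 unfolding B_def by (auto simp: mult.commute)
    then have "coprime (t^2 - s * g^2) N" using cop_iff by blast
    then show "(t, g) \<in> Cpart N s sg"
      using t cg g0 unfolding Cpart_def unitsJ_def units_mod_def using GT_phi by auto
  qed
  have "card (unitsJ N sg) * (card (units_mod N) - 2 * (p + q)) =
        (\<Sum>t\<in>unitsJ N sg. card (units_mod N) - 2 * (p + q))" by simp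
  also have "\<dots> \<le> (\<Sum>t\<in>unitsJ N sg. card (units_mod N - B t))"
  proof (rule sum_mono)
    fix t
    have "card (units_mod N) - card (B t) \<le> card (units_mod N - B t)"
      using finB by (rule diff_card_le_card_Diff)
    then show "card (units_mod N) - 2 * (p + q) \<le> card (units_mod N - B t)"
      using cB[of t] by linarith
  qed
  also have "\<dots> = card (SIGMA t:unitsJ N sg. units_mod N - B t)"
    using unitsJ_fin units_fin by (simp add: card_SigmaI)
  also have "\<dots> \<le> card (Cpart N s sg)" using sub Cpart_fin by (rule card_mono[rotated])
  finally show ?thesis .
qed

end

context pq begin
lemma card_bad:
  assumes cs: "coprime s N" and cw: "coprime (nrm s w) N"
  shows "card {u \<in> Cpart N s sg. \<not> good N s w u} \<le> 2 * (p * q) * (p + q)"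
proof -
  obtain w0 w1 where wg: "w = (w0, w1)" by (cases w)
  define L where "L P M c1 c2 = {(t, g). t \<in> {0..<P*M} \<and> g \<in> {0..<P*M} \<and> P dvd (c1 * t + c2 * g)}"
    for P M c1 c2 :: int
  have nrm: "coprime (w0 * w0 - (s * w1) * w1) N" using cw unfolding nrm_def wg by (simp add: power2_eq_square algebra_simps)
  have dd: "P dvd a * x - b * y" if "P dvd a" "P dvd b" for P a b x y :: int
    using that by (simp add: dvd_diff dvd_mult2)
  have np1: "\<not> (int p dvd w0 \<and> int p dvd s * w1)"
  proof
    assume h: "int p dvd w0 \<and> int p dvd s * w1"
    then have "int p dvd w0 * w0 - (s * w1) * w1" using dd by blast
    then show False using nrm cop_iff by blast
  qed
  have nq1: "\<not> (int q dvd w0 \<and> int q dvd s * w1)"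
  proof
    assume h: "int q dvd w0 \<and> int q dvd s * w1"
    then have "int q dvd w0 * w0 - (s * w1) * w1" using dd by blast
    then show False using nrm cop_iff by blast
  qed
  have np2: "\<not> (int p dvd w1 \<and> int p dvd w0)"
  proof
    assume h: "int p dvd w1 \<and> int p dvd w0"
    then have "int p dvd w0 * w0 - (s * w1) * w1" using dd[of "int p" w0 "s * w1"] by (simp add: dvd_mult)
    then show False using nrm cop_iff by blast
  qed
  have nq2: "\<not> (int q dvd w1 \<and> int q dvd w0)"
  proof
    assume h: "int q dvd w1 \<and> int q dvd w0"
    then have "int q dvd w0 * w0 - (s * w1) * w1" using dd[of "int q" w0 "s * w1"] by (simp add: dvd_mult)
    then show False using nrm cop_iff by blast
  qed
  have finL: "finite (L P M c1 c2)" for P M c1 c2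
    unfolding L_def by (rule finite_subset[of _ "{0..<P*M} \<times> {0..<P*M}"]) auto
  have cL: "card (L P M c1 c2) \<le> nat (P*M) * nat M" if "prime P" "M \<ge> 0" "\<not> (P dvd c1 \<and> P dvd c2)" for P M c1 c2
    unfolding L_def using count_lin_pairs[OF that] .
  have Leq: "L (int q) (int p) c1 c2 = {(t, g). t \<in> {0..<N} \<and> g \<in> {0..<N} \<and> int q dvd (c1 * t + c2 * g)}" for c1 c2
    unfolding L_def by (auto simp: mult.commute)
  have sub: "{u \<in> Cpart N s sg. \<not> good N s w u} \<subseteq>
      L (int p) (int q) w0 (s * w1) \<union> L (int q) (int p) w0 (s * w1) \<union> L (int p) (int q) w1 w0 \<union> L (int q) (int p) w1 w0"
  proof (rule subsetI)
    fix x assume xin: "x \<in> {u \<in> Cpart N s sg. \<not> good N s w u}"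
    obtain t g where xg: "x = (t, g)" by (cases x)
    have u: "(t, g) \<in> Cpart N s sg" and ng: "\<not> good N s w (t, g)" using xin xg by auto
    have r: "0 \<le> t" "t < N" "0 \<le> g" "g < N" using Cpart_D[OF u] by auto
    have mem: "(t, g) \<in> L P M c1 c2 \<longleftrightarrow> P dvd (c1 * t + c2 * g)"
      if "P * M = N" for P M c1 c2 using r that unfolding L_def by auto
    have e1: "int p * int q = N" "int q * int p = N" by simp_all
    have "\<not> coprime (w0 * t + s * w1 * g) N \<or> \<not> coprime (w1 * t + w0 * g) N"
      using ng unfolding good_def wg rm_def by (auto simp: algebra_simps)
    then have "int p dvd (w0 * t + s * w1 * g) \<or> int q dvd (w0 * t + s * w1 * g) \<or>
          int p dvd (w1 * t + w0 * g) \<or> int q dvd (w1 * t + w0 * g)"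
      using cop_iff by blast
    then show "x \<in> L (int p) (int q) w0 (s * w1) \<union> L (int q) (int p) w0 (s * w1) \<union> L (int p) (int q) w1 w0 \<union> L (int q) (int p) w1 w0"
      unfolding xg using mem[OF e1(1)] mem[OF e1(2)] by (simp add: mult.assoc)
  qed
  have "card {u \<in> Cpart N s sg. \<not> good N s w u} \<le>
      card (L (int p) (int q) w0 (s * w1) \<union> L (int q) (int p) w0 (s * w1) \<union> L (int p) (int q) w1 w0 \<union> L (int q) (int p) w1 w0)"
    using sub by (rule card_mono[rotated]) (simp add: finL)
  also have "\<dots> \<le> card (L (int p) (int q) w0 (s * w1)) + card (L (int q) (int p) w0 (s * w1)) +
      card (L (int p) (int q) w1 w0) + card (L (int q) (int p) w1 w0)"
    by (meson card_Un_le add_le_mono1 le_trans)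
  also have "\<dots> \<le> (p * q) * q + (q * p) * p + (p * q) * q + (q * p) * p"
    using cL[OF ppi _ np1, of "int q"] cL[OF qpi _ nq1, of "int p"] cL[OF ppi _ np2, of "int q"] cL[OF qpi _ nq2, of "int p"]
    by (simp add: nat_mult_distrib)
  also have "\<dots> = 2 * (p * q) * (p + q)" by (simp add: algebra_simps)
  finally show ?thesis .
qed

end


lemma arith1:
  fixes n k e d :: real
  assumes "n > 0" "0 \<le> k" "k \<le> n" "0 \<le> e" "e \<le> d"
  shows "\<bar>(k + e) / (n + d) - k / n\<bar> \<le> d / (n + d)"
proof -
  have nd: "n + d > 0" using assms by linarith
  have eq: "(k + e) / (n + d) - k / n = (n * e - k * d) / (n * (n + d))"
    using assms nd by (simp add: field_simps)
  have "n * e \<le> n * d" using assms by (simp add: mult_left_mono)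
  moreover have "k * d \<le> n * d" using assms by (simp add: mult_right_mono)
  moreover have "0 \<le> n * e" "0 \<le> k * d" using assms by simp_all
  ultimately have "\<bar>n * e - k * d\<bar> \<le> n * d" by linarith
  then have "\<bar>n * e - k * d\<bar> / (n * (n + d)) \<le> (n * d) / (n * (n + d))"
    using assms nd by (intro divide_right_mono) simp_all
  also have "\<dots> = d / (n + d)" using assms by simp
  finally show ?thesis unfolding eq using assms nd by (simp add: abs_divide abs_mult)
qed

lemma arith2:
  fixes n k e1 d1 e2 d2 :: real
  assumes "0 \<le> n" "0 \<le> k" "k \<le> n" "0 \<le> e1" "e1 \<le> d1" "0 \<le> e2" "e2 \<le> d2" "n + d1 > 0" "n + d2 > 0"
  shows "\<bar>(k + e2) / (n + d2) - (k + e1) / (n + d1)\<bar> \<le> d1 / (n + d1) + d2 / (n + d2)"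
proof (cases "n = 0")
  case True
  then have k: "k = 0" using assms by simp
  have "(k + e1) / (n + d1) \<le> 1" "(k + e2) / (n + d2) \<le> 1" using assms True k by simp_all
  moreover have "0 \<le> (k + e1) / (n + d1)" "0 \<le> (k + e2) / (n + d2)" using assms by simp_all
  moreover have "d1 / (n + d1) = 1" "d2 / (n + d2) = 1" using assms True by simp_all
  ultimately show ?thesis by linarith
next
  case False
  then have n: "n > 0" using assms by simp
  show ?thesis using arith1[OF n assms(2,3,4,5)] arith1[OF n assms(2,3,6,7)] by linarith
qed

lemma prob_map_set:
  assumes "finite A" "A \<noteq> {}"
  shows "measure_pmf.prob (map_pmf f (pmf_of_set A)) S = real (card (A \<inter> f -` S)) / real (card A)"
  using assms by (simp add: measure_map_pmf measure_pmf_of_set)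

lemma SD_le:
  assumes "\<And>S. \<bar>measure_pmf.prob P S - measure_pmf.prob Q S\<bar> \<le> b"
  shows "SD P Q \<le> b"
  unfolding SD_def by (rule cSUP_least) (use assms in auto)

lemma SD_le_1: "SD P Q \<le> 1"
proof (rule SD_le)
  fix S
  have "0 \<le> measure_pmf.prob P S" "measure_pmf.prob P S \<le> 1" "0 \<le> measure_pmf.prob Q S" "measure_pmf.prob Q S \<le> 1"
    by simp_all
  then show "\<bar>measure_pmf.prob P S - measure_pmf.prob Q S\<bar> \<le> 1" by linarith
qed

lemma SD_bij:
  assumes fA: "finite A" and fB: "finite B" and nA: "A \<noteq> {}" and nB: "B \<noteq> {}"
    and sA: "A0 \<subseteq> A" and sB: "B0 \<subseteq> B" and bij: "bij_betw ps A0 B0"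
    and hf: "\<And>x. x \<in> A0 \<Longrightarrow> h (ps x) = f x"
  shows "SD (map_pmf h (pmf_of_set B)) (map_pmf f (pmf_of_set A)) \<le>
         real (card (A - A0)) / real (card A) + real (card (B - B0)) / real (card B)"
proof (rule SD_le)
  fix S
  have fA0: "finite A0" using fA sA finite_subset by blast
  have fB0: "finite B0" using fB sB finite_subset by blast
  define k where "k = card (A0 \<inter> f -` S)"
  have img: "ps ` (A0 \<inter> f -` S) = B0 \<inter> h -` S"
  proof
    show "ps ` (A0 \<inter> f -` S) \<subseteq> B0 \<inter> h -` S"
      using bij hf unfolding bij_betw_def by auto
    show "B0 \<inter> h -` S \<subseteq> ps ` (A0 \<inter> f -` S)"
    proof
      fix y assume y: "y \<in> B0 \<inter> h -` S"
      then obtain x where x: "x \<in> A0" "y = ps x" using bij unfolding bij_betw_def by auto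
      then have "f x \<in> S" using y hf by auto
      then show "y \<in> ps ` (A0 \<inter> f -` S)" using x by auto
    qed
  qed
  have kB: "card (B0 \<inter> h -` S) = k"
    unfolding k_def img[symmetric]
    by (rule card_image) (use bij in \<open>auto simp: bij_betw_def intro: inj_on_subset\<close>)
  have n0: "card A0 = card B0" using bij by (rule bij_betw_same_card)
  have splitA: "card (A \<inter> f -` S) = k + card ((A - A0) \<inter> f -` S)"
  proof -
    have "A \<inter> f -` S = (A0 \<inter> f -` S) \<union> ((A - A0) \<inter> f -` S)" using sA by auto
    moreover have "card ((A0 \<inter> f -` S) \<union> ((A - A0) \<inter> f -` S)) = card (A0 \<inter> f -` S) + card ((A - A0) \<inter> f -` S)"
      by (rule card_Un_disjoint) (use fA fA0 in auto)
    ultimately show ?thesis unfolding k_def by simp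
  qed
  have splitB: "card (B \<inter> h -` S) = k + card ((B - B0) \<inter> h -` S)"
  proof -
    have "B \<inter> h -` S = (B0 \<inter> h -` S) \<union> ((B - B0) \<inter> h -` S)" using sB by auto
    moreover have "card ((B0 \<inter> h -` S) \<union> ((B - B0) \<inter> h -` S)) = card (B0 \<inter> h -` S) + card ((B - B0) \<inter> h -` S)"
      by (rule card_Un_disjoint) (use fB fB0 in auto)
    ultimately show ?thesis unfolding kB[symmetric] by simp
  qed
  have cA: "card A = card A0 + card (A - A0)" using fA sA fA0 card_mono[OF fA sA] by (simp add: card_Diff_subset)
  have cB: "card B = card A0 + card (B - B0)" using fB sB fB0 n0 card_mono[OF fB sB] by (simp add: card_Diff_subset)
  have e1: "card ((A - A0) \<inter> f -` S) \<le> card (A - A0)" using fA by (intro card_mono) auto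
  have e2: "card ((B - B0) \<inter> h -` S) \<le> card (B - B0)" using fB by (intro card_mono) auto
  have kle: "k \<le> card A0" unfolding k_def using fA0 by (intro card_mono) auto
  have pA: "card A > 0" using fA nA by (simp add: card_gt_0_iff)
  have pB: "card B > 0" using fB nB by (simp add: card_gt_0_iff)
  show "\<bar>measure_pmf.prob (map_pmf h (pmf_of_set B)) S - measure_pmf.prob (map_pmf f (pmf_of_set A)) S\<bar>
        \<le> real (card (A - A0)) / real (card A) + real (card (B - B0)) / real (card B)"
    unfolding prob_map_set[OF fA nA] prob_map_set[OF fB nB] splitA splitB cA cB
    using arith2[of "card A0" k "card ((A - A0) \<inter> f -` S)" "card (A - A0)" "card ((B - B0) \<inter> h -` S)" "card (B - B0)"]
      e1 e2 kle pA pB cA cB by simp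
qed


definition reord :: "(int \<times> int) \<times> (int \<times> int) \<Rightarrow> int \<times> int \<times> int \<times> int" where
  "reord x = (fst (fst x), fst (snd x), snd (fst x), snd (snd x))"

lemma reord_inj: "inj reord"
  unfolding reord_def by (rule injI) (auto simp: prod_eq_iff)

lemma E_acc_eq: "E_acc N a b = reord ` (Cpart N a (nu b) \<times> Cpart N (-a) (nu b))"
proof -
  have "x \<in> E_acc N a b \<longleftrightarrow> x \<in> reord ` (Cpart N a (nu b) \<times> Cpart N (-a) (nu b))" for x
  proof -
    obtain t1 t2 g1 g2 where x: "x = (t1, t2, g1, g2)" by (cases x) auto
    have "x \<in> reord ` (Cpart N a (nu b) \<times> Cpart N (-a) (nu b)) \<longleftrightarrow>
          ((t1, g1), (t2, g2)) \<in> Cpart N a (nu b) \<times> Cpart N (-a) (nu b)"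
    proof
      assume "x \<in> reord ` (Cpart N a (nu b) \<times> Cpart N (-a) (nu b))"
      then obtain y where "y \<in> Cpart N a (nu b) \<times> Cpart N (-a) (nu b)" "x = reord y" by blast
      then show "((t1, g1), (t2, g2)) \<in> Cpart N a (nu b) \<times> Cpart N (-a) (nu b)"
        unfolding x reord_def by (cases y) auto
    next
      assume "((t1, g1), (t2, g2)) \<in> Cpart N a (nu b) \<times> Cpart N (-a) (nu b)"
      moreover have "x = reord ((t1, g1), (t2, g2))" unfolding x reord_def by simp
      ultimately show "x \<in> reord ` (Cpart N a (nu b) \<times> Cpart N (-a) (nu b))" by blast
    qed
    also have "\<dots> \<longleftrightarrow> x \<in> E_acc N a b"
      unfolding x E_acc_def Cpart_def by (auto simp: E_cand_phi)
    finally show ?thesis by simp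
  qed
  then show ?thesis by blast
qed

lemma card_E_acc: "card (E_acc N a b) = card (Cpart N a (nu b)) * card (Cpart N (-a) (nu b))"
  unfolding E_acc_eq by (simp add: card_image inj_on_subset[OF reord_inj] card_cartesian_product)

lemma Encrypt_eq:
  "Encrypt N H idt b = map_pmf (\<lambda>(t1, t2, g1, g2). (phi N (H idt) (t1, g1), phi N (- H idt) (t2, g2), H idt))
      (pmf_of_set (E_acc N (H idt) b))"
  unfolding Encrypt_def E_def map_pmf_comp
  by (intro map_pmf_cong refl) (auto simp: E_cand_phi split: prod.splits)

lemma nu_ip2:
  assumes "length bs = length v"
  shows "prod_list (map (\<lambda>i. nu (bs ! i)) (filter (\<lambda>i. v ! i) [0..<length v])) = nu (ip2 v bs)"
proof -
  have "prod_list (map (\<lambda>i. nu (bs ! i)) (filter (\<lambda>i. v ! i) [0..<n])) =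
        nu (odd (\<Sum>i<n. (if v ! i \<and> bs ! i then 1 else 0 :: nat)))" for n
  proof (induction n)
    case 0 then show ?case by (simp add: nu_def)
  next
    case (Suc n)
    show ?case using Suc by (cases "v ! n"; cases "bs ! n") (auto simp: nu_def)
  qed
  then show ?thesis unfolding ip2_def by simp
qed


definition inv_ok :: "int \<Rightarrow> int \<Rightarrow> int \<times> int \<Rightarrow> int \<Rightarrow> int \<times> int \<Rightarrow> bool" where
  "inv_ok N s c k w \<longleftrightarrow> coprime k N \<and> coprime (nrm s w) N \<and>
     [fst c = k * fst (rm s w w)] (mod N) \<and> [snd c = k * snd (rm s w w)] (mod N)"

context pq begin

lemma inv_ok_step:
  assumes ok: "inv_ok N s c k w" and u: "(t, g) \<in> Cpart N s sg"
  shows "inv_ok N s (pmul N s c (phi N s (t, g))) (k * inv_mod N t) (rm s w (t, g))"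
    and "Jacobi (k * inv_mod N t) N = Jacobi k N * sg"
proof -
  note tu = Cpart_D[OF u]
  define t' where "t' = inv_mod N t"
  have tt: "[t * t' = 1] (mod N)" using inv_mod_props tu(1) unfolding t'_def by blast
  have ct': "coprime t' N" using inv_mod_coprime tu(1) unfolding t'_def by blast
  obtain w0 w1 where wg: "w = (w0, w1)" by (cases w)
  obtain c0 c1 where cg: "c = (c0, c1)" by (cases c)
  have ck: "coprime k N" and cw: "coprime (nrm s w) N"
    and h0: "[c0 = k * (w0 * w0 + s * w1 * w1)] (mod N)" and h1: "[c1 = k * (w0 * w1 + w1 * w0)] (mod N)"
    using ok unfolding inv_ok_def wg cg rm_def by auto
  define f0 where "f0 = fst (phi N s (t, g))"
  define f1 where "f1 = snd (phi N s (t, g))"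
  have pf0: "[f0 = t + s * g^2 * t'] (mod N)" unfolding f0_def phi_def t'_def by (simp add: Cong.cong_def)
  have pf1: "[f1 = 2 * g] (mod N)" unfolding f1_def phi_def by (simp add: Cong.cong_def)
  have m0: "[c0 * f0 + s * c1 * f1 = (k * t') * ((w0 * t + s * w1 * g) * (w0 * t + s * w1 * g) + s * (w0 * g + w1 * t) * (w0 * g + w1 * t))] (mod N)"
    using h0 h1 pf0 pf1 tt unfolding cong_iff_dvd_diff dvd_def by Groebner_Basis.algebra
  have m1: "[c0 * f1 + c1 * f0 = (k * t') * ((w0 * t + s * w1 * g) * (w0 * g + w1 * t) + (w0 * g + w1 * t) * (w0 * t + s * w1 * g))] (mod N)"
    using h0 h1 pf0 pf1 tt unfolding cong_iff_dvd_diff dvd_def by Groebner_Basis.algebra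
  have "nrm s (rm s w (t, g)) = nrm s w * (t^2 - s * g^2)" unfolding nrm_mult by (simp add: nrm_def)
  then have cn: "coprime (nrm s (rm s w (t, g))) N" using cw tu(8) by simp
  have "[fst (pmul N s c (phi N s (t, g))) = c0 * f0 + s * c1 * f1] (mod N)"
    "[snd (pmul N s c (phi N s (t, g))) = c0 * f1 + c1 * f0] (mod N)"
    unfolding pmul_def cg f0_def f1_def by (simp_all add: Cong.cong_def)
  with m0 m1 have "[fst (pmul N s c (phi N s (t, g))) = (k * t') * fst (rm s (rm s w (t, g)) (rm s w (t, g)))] (mod N)"
    "[snd (pmul N s c (phi N s (t, g))) = (k * t') * snd (rm s (rm s w (t, g)) (rm s w (t, g)))] (mod N)"
    unfolding wg rm_def by (auto intro: cong_trans)
  then show "inv_ok N s (pmul N s c (phi N s (t, g))) (k * inv_mod N t) (rm s w (t, g))"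
    unfolding inv_ok_def t'_def[symmetric] using ck ct' cn by simp
  show "Jacobi (k * inv_mod N t) N = Jacobi k N * sg"
    using jac_mult jac_inv tu(1) tu(4) by simp
qed

lemma inv_ok_fold:
  assumes "\<And>i. i \<in> set xs \<Longrightarrow> \<exists>tg. tg \<in> Cpart N s (sg i) \<and> sel i = phi N s tg"
    and "inv_ok N s c k w"
  shows "\<exists>k' w'. inv_ok N s (fold (\<lambda>i acc. pmul N s acc (sel i)) xs c) k' w' \<and>
           Jacobi k' N = Jacobi k N * prod_list (map sg xs)"
  using assms
proof (induction xs arbitrary: c k w)
  case Nil
  then show ?case by (intro exI[of _ k] exI[of _ w]) simp
next
  case (Cons i xs)
  obtain t g where tg: "(t, g) \<in> Cpart N s (sg i)" "sel i = phi N s (t, g)"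
    using Cons.prems(1)[of i] by auto
  note st = inv_ok_step[OF Cons.prems(2) tg(1)]
  have "\<exists>k' w'. inv_ok N s (fold (\<lambda>i acc. pmul N s acc (sel i)) xs (pmul N s c (sel i))) k' w' \<and>
           Jacobi k' N = Jacobi (k * inv_mod N t) N * prod_list (map sg xs)"
    using Cons.IH[of "pmul N s c (sel i)" "k * inv_mod N t" "rm s w (t, g)"] Cons.prems(1) st(1) tg(2) by simp
  then show ?case using st(2) by (simp add: mult.assoc)
qed

lemma inv_data:
  assumes cw: "coprime (nrm s w) N"
  shows "\<exists>W. coprime (nrm s W) N \<and> pc N (rm s W w) (1, 0) \<and> pc N (rm s w W) (1, 0)"
proof -
  obtain w0 w1 where wg: "w = (w0, w1)" by (cases w)
  define n' where "n' = inv_mod N (nrm s w)"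
  have nn: "[nrm s w * n' = 1] (mod N)" using inv_mod_props cw unfolding n'_def by blast
  have cn': "coprime n' N" using inv_mod_coprime cw unfolding n'_def by blast
  define W where "W = (n' * w0, - (n' * w1))"
  have nW: "nrm s W = n'^2 * nrm s w" unfolding W_def wg nrm_def by (simp add: power2_eq_square algebra_simps)
  have e: "nrm s w = w0 * w0 - s * w1 * w1" unfolding wg nrm_def by (simp add: power2_eq_square)
  have a1: "[n' * w0 * w0 + s * - (n' * w1) * w1 = 1] (mod N)"
    using nn e unfolding cong_iff_dvd_diff dvd_def by Groebner_Basis.algebra
  have "pc N (rm s W w) (1, 0)" "pc N (rm s w W) (1, 0)"
    unfolding pc_def rm_def W_def wg using a1 by (simp_all add: algebra_simps)
  moreover have "coprime (nrm s W) N" unfolding nW using cn' cw by simp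
  ultimately show ?thesis by blast
qed

end


lemma card_prod_diff:
  assumes "finite C1" "finite C2" "A1 \<subseteq> C1" "A2 \<subseteq> C2"
  shows "card (C1 \<times> C2 - A1 \<times> A2) \<le> card (C1 - A1) * card C2 + card C1 * card (C2 - A2)"
proof -
  have "C1 \<times> C2 - A1 \<times> A2 \<subseteq> (C1 - A1) \<times> C2 \<union> C1 \<times> (C2 - A2)" by auto
  then have "card (C1 \<times> C2 - A1 \<times> A2) \<le> card ((C1 - A1) \<times> C2 \<union> C1 \<times> (C2 - A2))"
    using assms by (intro card_mono) auto
  also have "\<dots> \<le> card ((C1 - A1) \<times> C2) + card (C1 \<times> (C2 - A2))" by (rule card_Un_le)
  also have "\<dots> = card (C1 - A1) * card C2 + card C1 * card (C2 - A2)" by (simp add: card_cartesian_product)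
  finally show ?thesis .
qed

lemma ratio_bound:
  fixes x1 x2 c1 c2 bb L :: real
  assumes "0 \<le> x1" "x1 \<le> bb" "0 \<le> x2" "x2 \<le> bb" "0 < L" "L \<le> c1" "L \<le> c2" "0 \<le> y" "y \<le> x1 * c2 + c1 * x2"
  shows "y / (c1 * c2) \<le> 2 * bb / L"
proof -
  have c: "c1 > 0" "c2 > 0" using assms by linarith+
  have "y / (c1 * c2) \<le> (x1 * c2 + c1 * x2) / (c1 * c2)" using assms c by (intro divide_right_mono) simp_all
  also have "\<dots> = x1 / c1 + x2 / c2" using c by (simp add: field_simps)
  also have "x1 / c1 \<le> bb / L"
    using assms c by (meson frac_le order_trans)
  also have "x2 / c2 \<le> bb / L"
    using assms c by (meson frac_le order_trans)
  finally show ?thesis by simp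
qed

context pq begin

lemma comp_bij:
  assumes cw: "coprime (nrm s w) N" and ck: "coprime k N" and cW: "coprime (nrm s W) N"
    and pW1: "pc N (rm s W w) (1, 0)" and pW2: "pc N (rm s w W) (1, 0)" and sg: "sg = 1 \<or> sg = -1"
  shows "bij_betw (psi N s w k) {u \<in> Cpart N s sg. good N s w u} {v \<in> Cpart N s (Jacobi k N * sg). good N s W v}"
proof -
  define k2 where "k2 = inv_mod N k"
  have ck2: "coprime k2 N" unfolding k2_def using inv_mod_coprime ck by blast
  have kk: "[k * k2 = 1] (mod N)" unfolding k2_def using inv_mod_props ck by blast
  then have kk': "[k2 * k = 1] (mod N)" by (simp add: mult.commute)
  have J2: "Jacobi k2 N = Jacobi k N" unfolding k2_def using jac_inv ck by blast
  have Jsq: "Jacobi k2 N * (Jacobi k N * sg) = sg" using J2 jac_unit[OF ck] by auto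
  show ?thesis
  proof (rule bij_betw_byWitness[where f' = "psi N s W k2"])
    show "\<forall>a\<in>{u \<in> Cpart N s sg. good N s w u}. psi N s W k2 (psi N s w k a) = a"
      using psi_main(3)[OF cw ck _ _ pW1 kk'] by blast
    show "\<forall>a'\<in>{v \<in> Cpart N s (Jacobi k N * sg). good N s W v}. psi N s w k (psi N s W k2 a') = a'"
      using psi_main(3)[OF cW ck2 _ _ pW2 kk] by blast
    show "psi N s w k ` {u \<in> Cpart N s sg. good N s w u} \<subseteq> {v \<in> Cpart N s (Jacobi k N * sg). good N s W v}"
      using psi_main(1,2)[OF cw ck] pW1 by blast
    show "psi N s W k2 ` {v \<in> Cpart N s (Jacobi k N * sg). good N s W v} \<subseteq> {u \<in> Cpart N s sg. good N s w u}"
      using psi_main(1,2)[OF cW ck2] pW2 Jsq by (smt (verit) image_subset_iff mem_Collect_eq)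
  qed
qed

end


context pq begin

lemma half_bound:
  assumes cs: "coprime s N" and cs': "coprime s' N" and cw: "coprime (nrm s w) N" and cw': "coprime (nrm s' w') N"
    and lb: "\<And>s sg. coprime s N \<Longrightarrow> sg = 1 \<or> sg = -1 \<Longrightarrow> Lc \<le> card (Cpart N s sg)" and Lpos: "0 < Lc"
    and sg: "sg = 1 \<or> sg = -1"
  shows "real (card (Cpart N s sg \<times> Cpart N s' sg - {u \<in> Cpart N s sg. good N s w u} \<times> {u \<in> Cpart N s' sg. good N s' w' u}))
         / real (card (Cpart N s sg \<times> Cpart N s' sg)) \<le> 2 * real (2 * (p * q) * (p + q)) / real Lc"
proof -
  let ?C1 = "Cpart N s sg" and ?C2 = "Cpart N s' sg"
  let ?A1 = "{u \<in> ?C1. good N s w u}" and ?A2 = "{u \<in> ?C2. good N s' w' u}"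
  have d1: "?C1 - ?A1 = {u \<in> ?C1. \<not> good N s w u}" by auto
  have d2: "?C2 - ?A2 = {u \<in> ?C2. \<not> good N s' w' u}" by auto
  have x1: "card (?C1 - ?A1) \<le> 2 * (p * q) * (p + q)" unfolding d1 by (rule card_bad[OF cs cw])
  have x2: "card (?C2 - ?A2) \<le> 2 * (p * q) * (p + q)" unfolding d2 by (rule card_bad[OF cs' cw'])
  have cp: "card (?C1 \<times> ?C2 - ?A1 \<times> ?A2) \<le> card (?C1 - ?A1) * card ?C2 + card ?C1 * card (?C2 - ?A2)"
    by (rule card_prod_diff[OF Cpart_fin Cpart_fin]) auto
  have l1: "Lc \<le> card ?C1" using lb[OF cs sg] .
  have l2: "Lc \<le> card ?C2" using lb[OF cs' sg] .
  have cpr: "real (card (?C1 \<times> ?C2 - ?A1 \<times> ?A2)) \<le> real (card (?C1 - ?A1)) * real (card ?C2) + real (card ?C1) * real (card (?C2 - ?A2))"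
    using cp by (simp only: of_nat_add[symmetric] of_nat_mult[symmetric] of_nat_le_iff)
  have "real (card (?C1 \<times> ?C2 - ?A1 \<times> ?A2)) / (real (card ?C1) * real (card ?C2)) \<le> 2 * real (2 * (p * q) * (p + q)) / real Lc"
    by (rule ratio_bound[OF of_nat_0_le_iff iffD2[OF of_nat_le_iff x1] of_nat_0_le_iff iffD2[OF of_nat_le_iff x2]
          iffD2[OF of_nat_0_less_iff Lpos] iffD2[OF of_nat_le_iff l1] iffD2[OF of_nat_le_iff l2] of_nat_0_le_iff cpr])
  then show ?thesis by (simp add: card_cartesian_product)
qed

end

context pq begin
lemma SD_main:
  assumes ca: "coprime a N"
    and okc: "inv_ok N a c' k w" and okd: "inv_ok N (-a) d' k' w'"
    and Jk: "Jacobi k N = nu b" and Jk': "Jacobi k' N = nu b"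
    and lb: "\<And>s sg. coprime s N \<Longrightarrow> sg = 1 \<or> sg = -1 \<Longrightarrow> Lc \<le> card (Cpart N s sg)" and Lpos: "0 < Lc"
  shows "SD (map_pmf (\<lambda>(t1, t2, g1, g2). Some (phi N a (t1, g1), phi N (-a) (t2, g2), a)) (pmf_of_set (E_acc N a b)))
            (map_pmf (\<lambda>(t1, t2, g1, g2). Some (pmul N a c' (phi N a (t1, g1)), pmul N (-a) d' (phi N (-a) (t2, g2)), a))
               (pmf_of_set (E_acc N a False)))
         \<le> 4 * real (2 * (p * q) * (p + q)) / real Lc"
proof -
  have ca': "coprime (-a) N" using ca by simp
  have ck: "coprime k N" and cw: "coprime (nrm a w) N" and c0: "[fst c' = k * fst (rm a w w)] (mod N)"
    and c1: "[snd c' = k * snd (rm a w w)] (mod N)" using okc unfolding inv_ok_def by auto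
  have ck': "coprime k' N" and cw': "coprime (nrm (-a) w') N" and d0: "[fst d' = k' * fst (rm (-a) w' w')] (mod N)"
    and d1: "[snd d' = k' * snd (rm (-a) w' w')] (mod N)" using okd unfolding inv_ok_def by auto
  obtain W where W: "coprime (nrm a W) N" "pc N (rm a W w) (1, 0)" "pc N (rm a w W) (1, 0)"
    using inv_data[OF cw] by blast
  obtain W' where W': "coprime (nrm (-a) W') N" "pc N (rm (-a) W' w') (1, 0)" "pc N (rm (-a) w' W') (1, 0)"
    using inv_data[OF cw'] by blast
  have nub: "nu b = 1 \<or> nu b = -1" by (simp add: nu_def)
  have nuF: "nu False = 1" by (simp add: nu_def)
  define C1 where "C1 = Cpart N a 1"
  define C2 where "C2 = Cpart N (-a) 1"
  define D1 where "D1 = Cpart N a (nu b)"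
  define D2 where "D2 = Cpart N (-a) (nu b)"
  define A1 where "A1 = {u \<in> C1. good N a w u}"
  define A2 where "A2 = {u \<in> C2. good N (-a) w' u}"
  define B1 where "B1 = {u \<in> D1. good N a W u}"
  define B2 where "B2 = {u \<in> D2. good N (-a) W' u}"
  have fC: "finite (C1 \<times> C2)" "finite (D1 \<times> D2)" unfolding C1_def C2_def D1_def D2_def using Cpart_fin by simp_all
  have ne: "Cpart N s sg \<noteq> {}" if "coprime s N" "sg = 1 \<or> sg = -1" for s sg
  proof
    assume "Cpart N s sg = {}"
    then have "card (Cpart N s sg) = 0" by simp
    then show False using lb[OF that] Lpos by linarith
  qed
  have neC: "C1 \<times> C2 \<noteq> {}" "D1 \<times> D2 \<noteq> {}"
    unfolding C1_def C2_def D1_def D2_def using ne[OF ca] ne[OF ca'] nub by simp_all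
  have EF: "E_acc N a False = reord ` (C1 \<times> C2)" unfolding E_acc_eq C1_def C2_def nuF ..
  have EB: "E_acc N a b = reord ` (D1 \<times> D2)" unfolding E_acc_eq D1_def D2_def ..
  define Fe where "Fe = (\<lambda>(t1, t2, g1, g2). Some (phi N a (t1, g1), phi N (-a) (t2, g2), a))"
  define Fv where "Fv = (\<lambda>(t1, t2, g1, g2). Some (pmul N a c' (phi N a (t1, g1)), pmul N (-a) d' (phi N (-a) (t2, g2)), a))"
  have pe: "pmf_of_set (reord ` S) = map_pmf reord (pmf_of_set S)" if "finite S" "S \<noteq> {}" for S
    using map_pmf_of_set_inj[OF inj_on_subset[OF reord_inj] that(2) that(1)] by simp
  have bijc: "bij_betw (psi N a w k) A1 B1"
    using comp_bij[OF cw ck W(1) W(2) W(3), of 1] Jk unfolding A1_def B1_def C1_def D1_def by simp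
  have bijd: "bij_betw (psi N (-a) w' k') A2 B2"
    using comp_bij[OF cw' ck' W'(1) W'(2) W'(3), of 1] Jk' unfolding A2_def B2_def C2_def D2_def by simp
  have "SD (map_pmf (Fe \<circ> reord) (pmf_of_set (D1 \<times> D2))) (map_pmf (Fv \<circ> reord) (pmf_of_set (C1 \<times> C2)))
      \<le> real (card (C1 \<times> C2 - A1 \<times> A2)) / real (card (C1 \<times> C2)) + real (card (D1 \<times> D2 - B1 \<times> B2)) / real (card (D1 \<times> D2))"
  proof (rule SD_bij[OF fC(1) fC(2) neC(1) neC(2) _ _ bij_betw_map_prod[OF bijc bijd]])
    show "A1 \<times> A2 \<subseteq> C1 \<times> C2" "B1 \<times> B2 \<subseteq> D1 \<times> D2" unfolding A1_def A2_def B1_def B2_def by auto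
    fix x assume x: "x \<in> A1 \<times> A2"
    obtain t1 g1 t2 g2 where xg: "x = ((t1, g1), (t2, g2))" by (cases x) auto
    have u1: "(t1, g1) \<in> Cpart N a 1" "good N a w (t1, g1)" and u2: "(t2, g2) \<in> Cpart N (-a) 1" "good N (-a) w' (t2, g2)"
      using x unfolding xg A1_def A2_def C1_def C2_def by auto
    have e1: "phi N a (psi N a w k (t1, g1)) = pmul N a c' (phi N a (t1, g1))"
      using psi_main(4)[OF cw ck u1 c0 c1] .
    have e2: "phi N (-a) (psi N (-a) w' k' (t2, g2)) = pmul N (-a) d' (phi N (-a) (t2, g2))"
      using psi_main(4)[OF cw' ck' u2 d0 d1] .
    show "(Fe \<circ> reord) (map_prod (psi N a w k) (psi N (- a) w' k') x) = (Fv \<circ> reord) x"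
      unfolding xg Fe_def Fv_def reord_def using e1 e2 by (simp split: prod.splits)
  qed
  also have "\<dots> \<le> 2 * real (2 * (p * q) * (p + q)) / real Lc + 2 * real (2 * (p * q) * (p + q)) / real Lc"
    using half_bound[OF ca ca' cw cw' lb Lpos, of 1] half_bound[OF ca ca' W(1) W'(1) lb Lpos nub]
    unfolding A1_def A2_def B1_def B2_def C1_def C2_def D1_def D2_def by (intro add_mono) simp_all
  finally have "SD (map_pmf (Fe \<circ> reord) (pmf_of_set (D1 \<times> D2))) (map_pmf (Fv \<circ> reord) (pmf_of_set (C1 \<times> C2)))
      \<le> 4 * real (2 * (p * q) * (p + q)) / real Lc" by simp
  moreover have "map_pmf Fe (pmf_of_set (E_acc N a b)) = map_pmf (Fe \<circ> reord) (pmf_of_set (D1 \<times> D2))"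
    unfolding EB pe[OF fC(2) neC(2)] map_pmf_comp by (simp add: comp_def)
  moreover have "map_pmf Fv (pmf_of_set (E_acc N a False)) = map_pmf (Fv \<circ> reord) (pmf_of_set (C1 \<times> C2))"
    unfolding EF pe[OF fC(1) neC(1)] map_pmf_comp by (simp add: comp_def)
  ultimately show ?thesis unfolding Fe_def Fv_def by simp
qed

end

lemma num_bound:
  fixes P Q U m :: real
  assumes m: "m \<ge> 16" and P: "P \<ge> m" and Q: "Q \<ge> m" and U: "U \<ge> P * Q - P - Q"
  shows "2 * (P + Q) \<le> U" and "(P * Q)^2 / 4 \<le> (U / 2) * (U - 2 * (P + Q))"
    and "4 * (2 * (P * Q) * (P + Q)) / ((U / 2) * (U - 2 * (P + Q))) \<le> 64 / m"
proof -
  define X where "X = P * Q"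
  have P8: "P - 8 \<ge> 8" and Q8: "Q - 8 \<ge> 8" using m P Q by linarith+
  have "8 * 8 \<le> (P - 8) * (Q - 8)" by (rule mult_mono) (use P8 Q8 in auto)
  then have h1: "8 * (P + Q) \<le> X" unfolding X_def by (simp add: algebra_simps)
  have X0: "X > 0" unfolding X_def using m P Q by simp
  have UX: "U \<ge> X - (P + Q)" using U unfolding X_def by simp
  have "8 * U \<ge> 8 * X - 8 * (P + Q)" using UX by simp
  then have U7: "8 * U \<ge> 7 * X" using h1 by linarith
  show g1: "2 * (P + Q) \<le> U" using U7 h1 X0 by linarith
  have a1: "U / 2 \<ge> 7 * X / 16" using U7 by linarith
  have a2: "U - 2 * (P + Q) \<ge> 5 * X / 8" using U7 h1 by linarith
  have "(7 * X / 16) * (5 * X / 8) \<le> (U / 2) * (U - 2 * (P + Q))"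
    by (rule mult_mono[OF a1 a2]) (use U7 X0 in linarith)+
  moreover have "X^2 / 4 \<le> (7 * X / 16) * (5 * X / 8)"
    using X0 by (simp add: power2_eq_square field_simps)
  ultimately have L: "X^2 / 4 \<le> (U / 2) * (U - 2 * (P + Q))" by linarith
  then show "(P * Q)^2 / 4 \<le> (U / 2) * (U - 2 * (P + Q))" unfolding X_def .
  have pos: "X^2 / 4 > 0" using X0 by simp
  have "4 * (2 * X * (P + Q)) / ((U / 2) * (U - 2 * (P + Q))) \<le> 4 * (2 * X * (P + Q)) / (X^2 / 4)"
  proof (rule divide_left_mono)
    show "X\<^sup>2 / 4 \<le> U / 2 * (U - 2 * (P + Q))" by (rule L)
    show "0 \<le> 4 * (2 * X * (P + Q))" using X0 m P Q by simp
    have "0 < U / 2 * (U - 2 * (P + Q))" using L pos by linarith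
    then show "0 < U / 2 * (U - 2 * (P + Q)) * (X\<^sup>2 / 4)" using pos by (rule mult_pos_pos)
  qed
  also have "\<dots> = 32 / Q + 32 / P" unfolding X_def using X0 m P Q by (simp add: power2_eq_square field_simps)
  also have "32 / Q \<le> 32 / m" using m Q by (intro divide_left_mono) auto
  also have "32 / P \<le> 32 / m" using m P by (intro divide_left_mono) auto
  finally show "4 * (2 * (P * Q) * (P + Q)) / ((U / 2) * (U - 2 * (P + Q))) \<le> 64 / m"
    unfolding X_def by simp
qed

lemma negl_128: "negligible (\<lambda>lam. 128 / 2 ^ lam)"
  unfolding negligible_def
proof
  fix c :: nat
  have "((\<lambda>n::nat. 128 * real n ^ c / 2 ^ n) \<longlongrightarrow> 0) at_top" by real_asymp
  then have "eventually (\<lambda>n. 128 * real n ^ c / 2 ^ n < 1) at_top"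
    by (rule order_tendstoD) simp
  then obtain n0 where n0: "\<And>n. n \<ge> n0 \<Longrightarrow> 128 * real n ^ c / 2 ^ n < 1"
    unfolding eventually_at_top_linorder by blast
  show "\<exists>n0. \<forall>n\<ge>n0. \<bar>128 / 2 ^ n\<bar> < 1 / real n ^ c"
  proof (intro exI[of _ "max n0 1"] allI impI)
    fix n assume n: "max n0 1 \<le> n"
    have npos: "real n ^ c > 0" using n by simp
    have "128 * real n ^ c / 2 ^ n < 1" using n0 n by simp
    then have "128 / 2 ^ n * real n ^ c < 1" by (simp add: field_simps)
    then have "128 / 2 ^ n < 1 / real n ^ c" using npos by (simp add: field_simps)
    then show "\<bar>128 / 2 ^ n\<bar> < 1 / real n ^ c" by simp
  qed
qed


context pq begin

lemma final_bound:
  assumes "2 ^ (lam - 1) \<le> p" "2 ^ (lam - 1) \<le> q" "lam \<ge> 8"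
  shows "0 < (card (units_mod N) div 2) * (card (units_mod N) - 2 * (p + q))"
    and "4 * real (2 * (p * q) * (p + q)) / real ((card (units_mod N) div 2) * (card (units_mod N) - 2 * (p + q)))
         \<le> 128 / 2 ^ lam"
proof -
  let ?U = "card (units_mod N)"
  have m16: "(16::real) \<le> 2 ^ (lam - 1)"
  proof -
    have "(2::real) ^ 4 \<le> 2 ^ (lam - 1)" using assms(3) by (intro power_increasing) auto
    then show ?thesis by simp
  qed
  have "real (2 ^ (lam - 1)) \<le> real p" using assms(1) by (simp only: of_nat_le_iff)
  then have P: "real p \<ge> 2 ^ (lam - 1)" by simp
  have "real (2 ^ (lam - 1)) \<le> real q" using assms(2) by (simp only: of_nat_le_iff)
  then have Q: "real q \<ge> 2 ^ (lam - 1)" by simp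
  have "real (p * q) \<le> real (?U + p + q)" using card_units by (simp only: of_nat_le_iff)
  then have U: "real ?U \<ge> real p * real q - real p - real q" by simp
  note nb = num_bound[OF m16 P Q U]
  have ev: "?U = 2 * card (unitsJ N 1)" using card_unitsJ[of 1] by simp
  have half: "real (?U div 2) = real ?U / 2" using ev by simp
  have "real (2 * (p + q)) \<le> real ?U" using nb(1) by simp
  then have le: "2 * (p + q) \<le> ?U" by (simp only: of_nat_le_iff)
  have sub: "real (?U - 2 * (p + q)) = real ?U - 2 * (real p + real q)" using le by (simp add: of_nat_diff)
  have Lr: "real ((?U div 2) * (?U - 2 * (p + q))) = (real ?U / 2) * (real ?U - 2 * (real p + real q))"
    using half sub by simp
  have pq0: "0 < real p * real q" using p2 q2 by simp
  have "0 < (real p * real q)^2 / 4" using p2 q2 by simp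
  then have "0 < real ((?U div 2) * (?U - 2 * (p + q)))" using nb(2) Lr by linarith
  then show "0 < (?U div 2) * (?U - 2 * (p + q))" using of_nat_0_less_iff by blast
  have "4 * real (2 * (p * q) * (p + q)) / real ((?U div 2) * (?U - 2 * (p + q)))
      = 4 * (2 * (real p * real q) * (real p + real q)) / ((real ?U / 2) * (real ?U - 2 * (real p + real q)))"
    unfolding Lr by simp
  also have "\<dots> \<le> 64 / 2 ^ (lam - 1)" using nb(3) .
  also have "\<dots> = 128 / 2 ^ lam"
  proof -
    obtain l where l: "lam = Suc l" using assms(3) by (cases lam) auto
    show ?thesis unfolding l by simp
  qed
  finally show "4 * real (2 * (p * q) * (p + q)) / real ((?U div 2) * (?U - 2 * (p + q))) \<le> 128 / 2 ^ lam" .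
qed

end


context pq begin

lemma main_instance:
  assumes lp: "2 ^ (lam - 1) \<le> p" and lq: "2 ^ (lam - 1) \<le> q" and l8: "lam \<ge> 8"
    and Hu: "\<forall>x. H x \<in> unitsJ N 1"
    and l1: "length v \<ge> 1" and lb: "length bs = length v" and lc: "length cts = length v"
    and cts: "\<forall>i<length v. cts ! i \<in> set_pmf (Encrypt N H idt (bs ! i))"
  shows "SD (map_pmf Some (Encrypt N H idt (ip2 v bs))) (Eval N v cts) \<le> 128 / 2 ^ lam"
proof -
  define a where "a = H idt"
  have ca: "coprime a N" using Hu unfolding a_def unitsJ_def units_mod_def by auto
  define Lc where "Lc = (card (units_mod N) div 2) * (card (units_mod N) - 2 * (p + q))"
  have Lpos: "0 < Lc" unfolding Lc_def using final_bound(1)[OF lp lq l8] .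
  have LB: "Lc \<le> card (Cpart N s sg)" if cs: "coprime s N" and sg: "sg = 1 \<or> sg = -1" for s sg
  proof -
    have "card (unitsJ N sg) = card (units_mod N) div 2" using card_unitsJ[OF sg] by simp
    then show ?thesis unfolding Lc_def using card_Cpart_lower[OF cs sg] by simp
  qed
  have nub: "nu b = 1 \<or> nu b = -1" for b by (simp add: nu_def)
  have neE: "E_acc N a b \<noteq> {}" for b
  proof -
    have "0 < Lc * Lc" using Lpos by simp
    also have "Lc * Lc \<le> card (Cpart N a (nu b)) * card (Cpart N (-a) (nu b))"
      using LB[OF ca nub] LB[of "-a", OF _ nub] ca by (intro mult_mono) auto
    finally show ?thesis unfolding card_E_acc[symmetric] by (metis card.empty less_irrefl)
  qed
  have finE: "finite (E_acc N a b)" for b unfolding E_acc_eq by (intro finite_imageI finite_cartesian_product Cpart_fin)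
  have dec: "\<exists>t1 t2 g1 g2. (t1, g1) \<in> Cpart N a (nu (bs ! i)) \<and> (t2, g2) \<in> Cpart N (-a) (nu (bs ! i)) \<and>
               cts ! i = (phi N a (t1, g1), phi N (-a) (t2, g2), a)" if i: "i < length v" for i
  proof -
    have "cts ! i \<in> set_pmf (Encrypt N H idt (bs ! i))" using cts i by blast
    then obtain x where x: "x \<in> E_acc N a (bs ! i)"
      and e: "cts ! i = (\<lambda>(t1, t2, g1, g2). (phi N a (t1, g1), phi N (- a) (t2, g2), a)) x"
      unfolding Encrypt_eq a_def[symmetric] set_map_pmf set_pmf_of_set[OF neE finE] by blast
    obtain y where y: "y \<in> Cpart N a (nu (bs ! i)) \<times> Cpart N (-a) (nu (bs ! i))" and xy: "x = reord y"
      using x unfolding E_acc_eq by blast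
    obtain t1 g1 t2 g2 where yg: "y = ((t1, g1), (t2, g2))" by (cases y) auto
    show ?thesis using y e xy unfolding yg reord_def by auto
  qed
  have ne: "cts \<noteq> []" using l1 lc by auto
  have "0 < length v" using l1 by linarith
  then obtain t1 t2 g1 g2 where "cts ! 0 = (phi N a (t1, g1), phi N (-a) (t2, g2), a)" using dec by blast
  then have hd: "snd (snd (hd cts)) = a" using hd_conv_nth[OF ne] by simp
  have allA: "\<not> (\<exists>ct\<in>set cts. snd (snd ct) \<noteq> a)"
  proof
    assume "\<exists>ct\<in>set cts. snd (snd ct) \<noteq> a"
    then obtain i where "i < length cts" "snd (snd (cts ! i)) \<noteq> a" by (auto simp: in_set_conv_nth)
    then show False using dec[of i] lc by auto
  qed
  define xs where "xs = filter (\<lambda>i. v ! i) [0..<length cts]"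
  define c' where "c' = fold (\<lambda>i acc. pmul N a acc (fst (cts ! i))) xs (1, 0)"
  define d' where "d' = fold (\<lambda>i acc. pmul N (-a) acc (fst (snd (cts ! i)))) xs (1, 0)"
  have Ev: "Eval N v cts = map_pmf (\<lambda>(cz, dz). Some (pmul N a c' cz, pmul N (- a) d' dz, a)) (E N a False)"
    unfolding Eval_def Let_def hd c'_def d'_def xs_def using allA by simp
  have Ev2: "Eval N v cts = map_pmf (\<lambda>(t1, t2, g1, g2). Some (pmul N a c' (phi N a (t1, g1)), pmul N (-a) d' (phi N (-a) (t2, g2)), a))
      (pmf_of_set (E_acc N a False))"
    unfolding Ev E_def map_pmf_comp by (intro map_pmf_cong refl) (auto simp: E_cand_phi split: prod.splits)
  have En: "map_pmf Some (Encrypt N H idt (ip2 v bs)) =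
      map_pmf (\<lambda>(t1, t2, g1, g2). Some (phi N a (t1, g1), phi N (-a) (t2, g2), a)) (pmf_of_set (E_acc N a (ip2 v bs)))"
    unfolding Encrypt_eq a_def[symmetric] map_pmf_comp by (intro map_pmf_cong refl) (auto split: prod.splits)
  have inv0: "inv_ok N s (1, 0) 1 (1, 0)" for s
    unfolding inv_ok_def nrm_def rm_def by (simp add: cong_refl)
  have J1: "Jacobi 1 N = 1" using jac_sq[of 1] by simp
  have xs_in: "i \<in> set xs \<Longrightarrow> i < length v" for i unfolding xs_def using lc by auto
  have prodnu: "prod_list (map (\<lambda>i. nu (bs ! i)) xs) = nu (ip2 v bs)"
    unfolding xs_def lc using nu_ip2[OF lb] .
  obtain k w where okc: "inv_ok N a c' k w" and Jk: "Jacobi k N = nu (ip2 v bs)"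
  proof -
    have "\<exists>k' w'. inv_ok N a (fold (\<lambda>i acc. pmul N a acc (fst (cts ! i))) xs (1, 0)) k' w' \<and>
           Jacobi k' N = Jacobi 1 N * prod_list (map (\<lambda>i. nu (bs ! i)) xs)"
    proof (rule inv_ok_fold[OF _ inv0])
      fix i assume "i \<in> set xs"
      then obtain t1 t2 g1 g2 where "(t1, g1) \<in> Cpart N a (nu (bs ! i))" "cts ! i = (phi N a (t1, g1), phi N (-a) (t2, g2), a)"
        using dec xs_in by blast
      then show "\<exists>tg. tg \<in> Cpart N a (nu (bs ! i)) \<and> fst (cts ! i) = phi N a tg" by auto
    qed
    then show ?thesis using that unfolding c'_def J1 prodnu by auto
  qed
  obtain k' w' where okd: "inv_ok N (-a) d' k' w'" and Jk': "Jacobi k' N = nu (ip2 v bs)"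
  proof -
    have "\<exists>k' w'. inv_ok N (-a) (fold (\<lambda>i acc. pmul N (-a) acc (fst (snd (cts ! i)))) xs (1, 0)) k' w' \<and>
           Jacobi k' N = Jacobi 1 N * prod_list (map (\<lambda>i. nu (bs ! i)) xs)"
    proof (rule inv_ok_fold[OF _ inv0])
      fix i assume "i \<in> set xs"
      then obtain t1 t2 g1 g2 where "(t2, g2) \<in> Cpart N (-a) (nu (bs ! i))" "cts ! i = (phi N a (t1, g1), phi N (-a) (t2, g2), a)"
        using dec xs_in by blast
      then show "\<exists>tg. tg \<in> Cpart N (-a) (nu (bs ! i)) \<and> fst (snd (cts ! i)) = phi N (-a) tg" by auto
    qed
    then show ?thesis using that unfolding d'_def J1 prodnu by auto
  qed
  have "SD (map_pmf Some (Encrypt N H idt (ip2 v bs))) (Eval N v cts) \<le> 4 * real (2 * (p * q) * (p + q)) / real Lc"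
    unfolding En Ev2 by (rule SD_main[OF ca okc okd Jk Jk' LB Lpos])
  also have "\<dots> \<le> 128 / 2 ^ lam" unfolding Lc_def by (rule final_bound(2)[OF lp lq l8])
  finally show ?thesis .
qed

end

theorem corollary3:
  shows "\<exists>\<mu>::nat \<Rightarrow> real. negligible \<mu> \<and>
    (\<forall>lam p q (H :: bool list \<Rightarrow> int) idt v bs cts.
       (p, q) \<in> setup_support lam \<longrightarrow>
       (\<forall>x. H x \<in> unitsJ (int (p * q)) 1) \<longrightarrow>
       length v \<ge> 1 \<longrightarrow> length bs = length v \<longrightarrow> length cts = length v \<longrightarrow>
       (\<forall>i<length v. cts ! i \<in> set_pmf (Encrypt (int (p * q)) H idt (bs ! i))) \<longrightarrow>
       SD (map_pmf Some (Encrypt (int (p * q)) H idt (ip2 v bs)))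
          (Eval (int (p * q)) v cts) \<le> \<mu> lam)"
proof (intro exI[of _ "\<lambda>lam. 128 / 2 ^ lam"] conjI allI impI)
  show "negligible (\<lambda>lam. 128 / 2 ^ lam)" by (rule negl_128)
  fix lam p q and H :: "bool list \<Rightarrow> int" and idt :: "bool list" and v bs :: "bool list" and cts :: "ctxt list"
  assume S: "(p, q) \<in> setup_support lam" and Hu: "\<forall>x. H x \<in> unitsJ (int (p * q)) 1"
    and l1: "length v \<ge> 1" and lb: "length bs = length v" and lc: "length cts = length v"
    and cts: "\<forall>i<length v. cts ! i \<in> set_pmf (Encrypt (int (p * q)) H idt (bs ! i))"
  show "SD (map_pmf Some (Encrypt (int (p * q)) H idt (ip2 v bs))) (Eval (int (p * q)) v cts) \<le> 128 / 2 ^ lam"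
  proof (cases "lam \<ge> 8")
    case False
    have "(2::real) ^ lam \<le> 2 ^ 7" using False by (intro power_increasing) auto
    then have "1 \<le> 128 / (2::real) ^ lam" by simp
    then show ?thesis using SD_le_1 order_trans by blast
  next
    case True
    have pr: "prime p" "prime q" "p \<noteq> q" "p mod 4 = 3" "q mod 4 = 3" "2 ^ (lam - 1) \<le> p" "2 ^ (lam - 1) \<le> q"
      using S unfolding setup_support_def by auto
    interpret pq p q by unfold_locales (use pr in auto)
    show ?thesis by (rule main_instance[OF pr(6) pr(7) True Hu l1 lb lc cts])
  qed
qed


end
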